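(* Let $\{(\mathcal{A}_{i,\mathcal{F}},\mathcal{A}_{i,\mathcal{B}})\}_{i\in\mathcal{I}}$ be a combinatorially free-Boolean independent (with amalgamation over $B$) family of pairs of $B$-faces in a $B$-valued probability space $(\mathcal{A},\mathbb{E})$. Let $\chi:[n]\to\{\mathcal{F},\mathcal{B}\}$, $\pi\in INC(\chi)$, $\omega:[n]\to\mathcal{I}$, and $a_k\in\mathcal{A}_{\omega(k),\chi(k)}$ for $k=1,\dots,n$. If $\omega$ is not constant on some block of $\pi$, then $\kappa_{\chi,\pi}(a_1,\dots,a_n)=0$.
   Context: $B$ is a unital complex algebra; a $B$-valued probability space is $(\mathcal{A},\mathbb{E})$ with $\mathcal{A}\supseteq B$ a unital algebra and $\mathbb{E}:\mathcal{A}\to B$ linear with $\mathbb{E}(b_1ab_2)=b_1\mathbb{E}(a)b_2$. A pair of $B$-faces is a pair of (not necessarily unital) subalgebras that are $B$-$B$-bimodules. For $\chi:[n]\to\{\mathcal{F},\mathcal{B}\}$, $INC(\chi)$ is the set of noncrossing partitions $\pi$ of $[n]$ such that $v_1<w<v_2$, $v_1\sim_\pi v_2$, $\chi(w)=\mathcal{B}$ imply $w\sim_\pi v_1$; $\mu_{INC}$ is its Möbius function for reverse refinement, $1_n$ the one-block partition. $\Phi_\sigma(a_1,\dots,a_n)$ is the nested expectation: $\Phi_{1_n}=\mathbb{E}(a_1\cdots a_n)$ and for an interval block $W=\{l+1,\dots,l+s\}$ of $\sigma$, $\Phi_\sigma(a_1,\dots,a_n)=\Phi_{\sigma\setminus\{W\}}(a_1,\dots,a_l,\mathbb{E}(a_{l+1}\cdots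 a_{l+s})a_{l+s+1},\dots,a_n)$. Set $\kappa_{\chi,\pi}(a_1,\dots,a_n)=\sum_{\sigma\in INC(\chi),\sigma\le\pi}\mu_{INC}(\sigma,\pi)\Phi_\sigma(a_1,\dots,a_n)$. The family is combinatorially free-Boolean independent with amalgamation over $B$ if $\kappa_{\chi,1_n}(a_1,\dots,a_n)=0$ whenever $\omega:[n]\to\mathcal{I}$ is non-constant, $\chi$ arbitrary, and $a_k\in\mathcal{A}_{\omega(k),\chi(k)}$ for all $k$. *)

theory Defs
  imports Complex_Main "HOL-Library.Disjoint_Sets"
begin

text \<open>The ambient unital algebra \<open>\<A>\<close> is the type 'a (a ring with 1); its complex
  algebra structure is given by a ring homomorphism sc from the complex numbers into the
  centre of 'a (scalar multiplication c.x = sc c * x).\<close>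

definition complex_structure :: "(complex \<Rightarrow> 'a::ring_1) \<Rightarrow> bool" where
  "complex_structure sc \<longleftrightarrow>
     sc 1 = 1 \<and> (\<forall>c d. sc (c + d) = sc c + sc d) \<and> (\<forall>c d. sc (c * d) = sc c * sc d)
     \<and> (\<forall>c x. sc c * x = x * sc c)"

definition unital_subalgebra :: "(complex \<Rightarrow> 'a::ring_1) \<Rightarrow> 'a set \<Rightarrow> bool" where
  "unital_subalgebra sc S \<longleftrightarrow>
     1 \<in> S \<and> 0 \<in> S \<and> (\<forall>x\<in>S. \<forall>y\<in>S. x + y \<in> S \<and> x * y \<in> S)
     \<and> (\<forall>c. \<forall>x\<in>S. sc c * x \<in> S)"

definition B_prob_space :: "(complex \<Rightarrow> 'a::ring_1) \<Rightarrow> 'a set \<Rightarrow> ('a \<Rightarrow> 'a) \<Rightarrow> bool" where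
  "B_prob_space sc Bs E \<longleftrightarrow>
     complex_structure sc \<and> unital_subalgebra sc Bs
     \<and> (\<forall>x. E x \<in> Bs)
     \<and> (\<forall>x y. E (x + y) = E x + E y) \<and> (\<forall>c x. E (sc c * x) = sc c * E x)
     \<and> (\<forall>b1\<in>Bs. \<forall>b2\<in>Bs. \<forall>x. E (b1 * x * b2) = b1 * E x * b2)"

definition B_face :: "(complex \<Rightarrow> 'a::ring_1) \<Rightarrow> 'a set \<Rightarrow> 'a set \<Rightarrow> bool" where
  "B_face sc Bs S \<longleftrightarrow>
     0 \<in> S \<and> (\<forall>x\<in>S. \<forall>y\<in>S. x + y \<in> S \<and> x * y \<in> S) \<and> (\<forall>c. \<forall>x\<in>S. sc c * x \<in> S)
     \<and> (\<forall>b\<in>Bs. \<forall>x\<in>S. b * x \<in> S \<and> x * b \<in> S)"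

datatype side = FaceF | FaceB

definition same_block :: "nat set set \<Rightarrow> nat \<Rightarrow> nat \<Rightarrow> bool" where
  "same_block \<pi> x y \<longleftrightarrow> (\<exists>V\<in>\<pi>. x \<in> V \<and> y \<in> V)"

definition noncrossing :: "nat \<Rightarrow> nat set set \<Rightarrow> bool" where
  "noncrossing n \<pi> \<longleftrightarrow> partition_on {1..n} \<pi> \<and>
     (\<forall>V\<in>\<pi>. \<forall>W\<in>\<pi>. \<forall>a b c d. a < b \<and> b < c \<and> c < d \<and> a \<in> V \<and> c \<in> V \<and> b \<in> W \<and> d \<in> W
        \<longrightarrow> V = W)"

definition INC :: "nat \<Rightarrow> (nat \<Rightarrow> side) \<Rightarrow> nat set set set" where
  "INC n \<chi> = {\<pi>. noncrossing n \<pi> \<and>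
     (\<forall>v1 w v2. v1 < w \<and> w < v2 \<and> same_block \<pi> v1 v2 \<and> \<chi> w = FaceB \<longrightarrow> same_block \<pi> w v1)}"

definition one_part :: "nat \<Rightarrow> nat set set" where
  "one_part n = {{1..n}}"

definition refines :: "nat set set \<Rightarrow> nat set set \<Rightarrow> bool" where
  "refines \<sigma> \<pi> \<longleftrightarrow> (\<forall>V\<in>\<sigma>. \<exists>W\<in>\<pi>. V \<subseteq> W)"

text \<open>The recursion is run with a fuel argument; fuel card S always
  suffices for a finite poset S, since every recursive call descends along a strict chain in S.\<close>
fun mob_fuel :: "nat \<Rightarrow> 'p set \<Rightarrow> ('p \<Rightarrow> 'p \<Rightarrow> bool) \<Rightarrow> 'p \<Rightarrow> 'p \<Rightarrow> int" where
  "mob_fuel 0 S le x y = (if x = y then 1 else 0)"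
| "mob_fuel (Suc k) S le x y =
     (if x = y then 1
      else if le x y then - (\<Sum>z\<in>{z\<in>S. le x z \<and> le z y \<and> z \<noteq> y}. mob_fuel k S le x z)
      else 0)"

definition mobius :: "'p set \<Rightarrow> ('p \<Rightarrow> 'p \<Rightarrow> bool) \<Rightarrow> 'p \<Rightarrow> 'p \<Rightarrow> int" where
  "mobius S le x y = mob_fuel (card S) S le x y"

definition mu_INC :: "nat \<Rightarrow> (nat \<Rightarrow> side) \<Rightarrow> nat set set \<Rightarrow> nat set set \<Rightarrow> int" where
  "mu_INC n \<chi> \<sigma> \<pi> = mobius (INC n \<chi>) refines \<sigma> \<pi>"

text \<open>Elements a_1..a_n are given as a list xs with a_k = xs ! (k-1).
  nested_rel E \<sigma> xs v: v is obtained as Phi_sigma(xs) by the recursive description: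
  Phi_{1_n} = E(a_1...a_n); and for an interval block W = {l+1..l+s} of \<sigma> (with l+s < n)
  Phi_\<sigma>(a) = Phi_{\<sigma> \ W}(a_1,..,a_l, E(a_{l+1}...a_{l+s}) a_{l+s+1}, ..., a_n), where the
  remaining blocks are relabelled onto [n-s].\<close>
definition shift_down :: "nat \<Rightarrow> nat \<Rightarrow> nat \<Rightarrow> nat" where
  "shift_down l s j = (if j \<le> l then j else j - s)"

inductive nested_rel :: "('a::ring_1 \<Rightarrow> 'a) \<Rightarrow> nat set set \<Rightarrow> 'a list \<Rightarrow> 'a \<Rightarrow> bool"
  for E where
  full: "xs \<noteq> [] \<Longrightarrow> nested_rel E {{1..length xs}} xs (E (prod_list xs))"
| step: "\<lbrakk> {l+1..l+s} \<in> \<sigma>; 1 \<le> s; l + s < length xs;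
          nested_rel E ((\<lambda>V. shift_down l s ` V) ` (\<sigma> - {{l+1..l+s}}))
            (take l xs @ [E (prod_list (take s (drop l xs))) * xs ! (l + s)] @ drop (l + s + 1) xs) v \<rbrakk>
        \<Longrightarrow> nested_rel E \<sigma> xs v"

definition Phi :: "('a::ring_1 \<Rightarrow> 'a) \<Rightarrow> nat set set \<Rightarrow> 'a list \<Rightarrow> 'a" where
  "Phi E \<sigma> xs = (THE v. nested_rel E \<sigma> xs v)"

definition kappa :: "('a::ring_1 \<Rightarrow> 'a) \<Rightarrow> (nat \<Rightarrow> side) \<Rightarrow> nat set set \<Rightarrow> 'a list \<Rightarrow> 'a" where
  "kappa E \<chi> \<pi> xs =
     (\<Sum>\<sigma>\<in>{\<sigma>\<in>INC (length xs) \<chi>. refines \<sigma> \<pi>}.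
        of_int (mu_INC (length xs) \<chi> \<sigma> \<pi>) * Phi E \<sigma> xs)"

definition comb_free_boolean_indep ::
  "('a::ring_1 \<Rightarrow> 'a) \<Rightarrow> ('i \<Rightarrow> side \<Rightarrow> 'a set) \<Rightarrow> bool" where
  "comb_free_boolean_indep E AA \<longleftrightarrow>
     (\<forall>(xs::'a list) (\<chi>::nat \<Rightarrow> side) (\<omega>::nat \<Rightarrow> 'i).
        (\<exists>j\<in>{1..length xs}. \<exists>k\<in>{1..length xs}. \<omega> j \<noteq> \<omega> k)
        \<and> (\<forall>k\<in>{1..length xs}. xs ! (k - 1) \<in> AA (\<omega> k) (\<chi> k))
        \<longrightarrow> kappa E \<chi> (one_part (length xs)) xs = 0)"

end

theory Submission
  imports Defs
begin

lemma sb_mem: "same_block P x y \<Longrightarrow> x \<in> \<Union>P \<and> y \<in> \<Union>P"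
  unfolding same_block_def by blast

lemma sb_sym: "same_block P x y \<Longrightarrow> same_block P y x"
  unfolding same_block_def by blast

lemma sb_refl: "partition_on A P \<Longrightarrow> x \<in> A \<Longrightarrow> same_block P x x"
  unfolding same_block_def partition_on_def by blast

lemma part_uniq: "partition_on A P \<Longrightarrow> V \<in> P \<Longrightarrow> W \<in> P \<Longrightarrow> x \<in> V \<Longrightarrow> x \<in> W \<Longrightarrow> V = W"
  unfolding partition_on_def by (meson disjointD disjoint_iff)

lemma part_sub_A: "partition_on A P \<Longrightarrow> V \<in> P \<Longrightarrow> V \<subseteq> A"
  unfolding partition_on_def by blast

lemma part_cover: "partition_on A P \<Longrightarrow> x \<in> A \<Longrightarrow> \<exists>V\<in>P. x \<in> V"
  unfolding partition_on_def by blast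

lemma part_ne: "partition_on A P \<Longrightarrow> V \<in> P \<Longrightarrow> V \<noteq> {}"
  unfolding partition_on_def by blast

lemma sb_trans: "partition_on A P \<Longrightarrow> same_block P x y \<Longrightarrow> same_block P y z \<Longrightarrow> same_block P x z"
  unfolding same_block_def using part_uniq by metis

lemma sb_carrier: "partition_on A P \<Longrightarrow> same_block P x y \<Longrightarrow> x \<in> A \<and> y \<in> A"
  unfolding same_block_def partition_on_def by blast

lemma block_sb: "partition_on A P \<Longrightarrow> V \<in> P \<Longrightarrow> x \<in> V \<Longrightarrow> same_block P x y \<longleftrightarrow> y \<in> V"
  unfolding same_block_def using part_uniq by metis

lemma part_eq:
  assumes "partition_on A P" "partition_on A Q"
    and "\<And>x y. x \<in> A \<Longrightarrow> y \<in> A \<Longrightarrow> same_block P x y \<longleftrightarrow> same_block Q x y"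
  shows "P = Q"
proof -
  have "{(x, y). \<exists>p \<in> P. x \<in> p \<and> y \<in> p} = {(x, y). \<exists>p \<in> Q. x \<in> p \<and> y \<in> p}"
  proof (safe)
    fix x y p assume "p \<in> P" "x \<in> p" "y \<in> p"
    then have "same_block P x y" "x \<in> A" "y \<in> A" using assms(1) unfolding same_block_def partition_on_def by auto
    then have "same_block Q x y" using assms(3) by blast
    then show "\<exists>p \<in> Q. x \<in> p \<and> y \<in> p" unfolding same_block_def .
  next
    fix x y p assume "p \<in> Q" "x \<in> p" "y \<in> p"
    then have "same_block Q x y" "x \<in> A" "y \<in> A" using assms(2) unfolding same_block_def partition_on_def by auto
    then have "same_block P x y" using assms(3) by blast
    then show "\<exists>p \<in> P. x \<in> p \<and> y \<in> p" unfolding same_block_def .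
  qed
  then show ?thesis
    using partition_on_eq_quotient[OF assms(1)] partition_on_eq_quotient[OF assms(2)] by metis
qed

lemma part_img:
  assumes "partition_on A P" "inj_on f A"
  shows "partition_on (f ` A) ((\<lambda>V. f ` V) ` P)"
proof -
  have "(\<lambda>V. f ` V) ` P - {{}} = (\<lambda>V. f ` V) ` P"
    using assms(1) unfolding partition_on_def by auto
  then show ?thesis using partition_on_inj_image[OF assms] by simp
qed

lemma sb_img:
  assumes "partition_on A P" "inj_on f A" "x \<in> A" "y \<in> A"
  shows "same_block ((\<lambda>V. f ` V) ` P) (f x) (f y) \<longleftrightarrow> same_block P x y"
proof
  assume "same_block ((\<lambda>V. f ` V) ` P) (f x) (f y)"
  then obtain V where V: "V \<in> P" "f x \<in> f ` V" "f y \<in> f ` V" unfolding same_block_def by auto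
  have VA: "V \<subseteq> A" using V(1) assms(1) unfolding partition_on_def by auto
  from V(2) obtain x' where x': "x' \<in> V" "f x = f x'" by auto
  have "x' \<in> A" using VA x' by blast
  then have "x = x'" using inj_onD[OF assms(2) x'(2) assms(3)] by blast
  moreover from V(3) obtain y' where y': "y' \<in> V" "f y = f y'" by auto
  have "y' \<in> A" using VA y' by blast
  then have "y = y'" using inj_onD[OF assms(2) y'(2) assms(4)] by blast
  ultimately show "same_block P x y" using V \<open>x' \<in> V\<close> \<open>y' \<in> V\<close> unfolding same_block_def by auto
next
  assume "same_block P x y"
  then show "same_block ((\<lambda>V. f ` V) ` P) (f x) (f y)" unfolding same_block_def by blast
qed

lemma part_sub:
  assumes "partition_on A P" "Q \<subseteq> P"
  shows "partition_on (\<Union>Q) Q"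
  using assms unfolding partition_on_def by (meson pairwise_subset subset_iff)

lemma part_union:
  assumes "partition_on A P" "partition_on B Q" "A \<inter> B = {}"
  shows "partition_on (A \<union> B) (P \<union> Q)"
proof (rule partition_onI)
  show "\<Union>(P \<union> Q) = A \<union> B" using assms unfolding partition_on_def by auto
  show "{} \<notin> P \<union> Q" using assms unfolding partition_on_def by auto
  fix p q assume "p \<in> P \<union> Q" "q \<in> P \<union> Q" "p \<noteq> q"
  then show "disjnt p q"
  proof (elim UnE)
    assume "p \<in> P" "q \<in> P" then show ?thesis using \<open>p \<noteq> q\<close> assms(1) unfolding partition_on_def by (meson pairwiseD)
  next
    assume "p \<in> Q" "q \<in> Q" then show ?thesis using \<open>p \<noteq> q\<close> assms(2) unfolding partition_on_def by (meson pairwiseD)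
  next
    assume "p \<in> P" "q \<in> Q" then have "p \<subseteq> A" "q \<subseteq> B" using assms part_sub_A by blast+
    then show ?thesis using assms(3) unfolding disjnt_def by blast
  next
    assume "p \<in> Q" "q \<in> P" then have "p \<subseteq> B" "q \<subseteq> A" using assms part_sub_A by blast+
    then show ?thesis using assms(3) unfolding disjnt_def by blast
  qed
qed

lemma sb_union: "same_block (P \<union> Q) x y \<longleftrightarrow> same_block P x y \<or> same_block Q x y"
  unfolding same_block_def by blast

lemma refines_iff:
  assumes "partition_on A S" "partition_on A P"
  shows "refines S P \<longleftrightarrow> (\<forall>x y. same_block S x y \<longrightarrow> same_block P x y)"
proof
  assume r: "refines S P"
  show "\<forall>x y. same_block S x y \<longrightarrow> same_block P x y"
  proof (intro allI impI)
    fix x y assume "same_block S x y"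
    then obtain V where V: "V \<in> S" "x \<in> V" "y \<in> V" unfolding same_block_def by blast
    then obtain W where "W \<in> P" "V \<subseteq> W" using r unfolding Defs.refines_def by blast
    then show "same_block P x y" using V unfolding same_block_def by blast
  qed
next
  assume h: "\<forall>x y. same_block S x y \<longrightarrow> same_block P x y"
  show "refines S P" unfolding Defs.refines_def
  proof
    fix V assume V: "V \<in> S"
    then obtain x where x: "x \<in> V" using part_ne[OF assms(1)] by blast
    then have "x \<in> A" using V part_sub_A[OF assms(1)] by blast
    then obtain W where W: "W \<in> P" "x \<in> W" using part_cover[OF assms(2)] by blast
    have "V \<subseteq> W"
    proof
      fix y assume "y \<in> V"
      then have "same_block S x y" using V x unfolding same_block_def by blast
      then have "same_block P x y" using h by blast
      then show "y \<in> W" using block_sb[OF assms(2) W] by blast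
    qed
    then show "\<exists>W\<in>P. V \<subseteq> W" using W by blast
  qed
qed

definition NCs :: "nat \<Rightarrow> nat set set \<Rightarrow> bool" where
  "NCs n P \<longleftrightarrow> partition_on {1..n} P \<and>
     (\<forall>a b c d. a < b \<and> b < c \<and> c < d \<and> same_block P a c \<and> same_block P b d \<longrightarrow> same_block P a b)"

definition INCc :: "(nat \<Rightarrow> side) \<Rightarrow> nat set set \<Rightarrow> bool" where
  "INCc \<chi> P \<longleftrightarrow> (\<forall>v1 w v2. v1 < w \<and> w < v2 \<and> same_block P v1 v2 \<and> \<chi> w = FaceB \<longrightarrow> same_block P w v1)"

lemma noncrossing_iff: "noncrossing n P \<longleftrightarrow> NCs n P"
proof
  assume h: "noncrossing n P"
  then have p: "partition_on {1..n} P" unfolding noncrossing_def by blast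
  show "NCs n P" unfolding NCs_def
  proof (intro conjI p allI impI)
    fix a b c d assume H: "a < b \<and> b < c \<and> c < d \<and> same_block P a c \<and> same_block P b d"
    then obtain V W where "V \<in> P" "a \<in> V" "c \<in> V" "W \<in> P" "b \<in> W" "d \<in> W" unfolding same_block_def by blast
    then have "V = W" using h H unfolding noncrossing_def by blast
    then show "same_block P a b" using \<open>V \<in> P\<close> \<open>a \<in> V\<close> \<open>b \<in> W\<close> unfolding same_block_def by blast
  qed
next
  assume h: "NCs n P"
  then have p: "partition_on {1..n} P" unfolding NCs_def by blast
  show "noncrossing n P" unfolding noncrossing_def
  proof (intro conjI p ballI allI impI)
    fix V W a b c d assume VW: "V \<in> P" "W \<in> P" and H: "a < b \<and> b < c \<and> c < d \<and> a \<in> V \<and> c \<in> V \<and> b \<in> W \<and> d \<in> W"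
    then have "same_block P a c" "same_block P b d" unfolding same_block_def by blast+
    then have "same_block P a b" using h H unfolding NCs_def by blast
    then have "b \<in> V" using block_sb[OF p VW(1)] H by blast
    then show "V = W" using part_uniq[OF p VW] H by blast
  qed
qed

lemma INC_iff: "P \<in> INC n \<chi> \<longleftrightarrow> NCs n P \<and> INCc \<chi> P"
  unfolding INC_def INCc_def noncrossing_iff by simp

lemma NCs_part: "NCs n P \<Longrightarrow> partition_on {1..n} P"
  unfolding NCs_def by blast

lemma NCsD: "NCs n P \<Longrightarrow> a < b \<Longrightarrow> b < c \<Longrightarrow> c < d \<Longrightarrow> same_block P a c \<Longrightarrow> same_block P b d \<Longrightarrow> same_block P a b"
  unfolding NCs_def by blast

lemma INCcD: "INCc \<chi> P \<Longrightarrow> v1 < w \<Longrightarrow> w < v2 \<Longrightarrow> same_block P v1 v2 \<Longrightarrow> \<chi> w = FaceB \<Longrightarrow> same_block P w v1"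
  unfolding INCc_def by blast

section \<open>Moebius functions\<close>

definition po :: "'p set \<Rightarrow> ('p \<Rightarrow> 'p \<Rightarrow> bool) \<Rightarrow> bool" where
  "po S le \<longleftrightarrow> finite S \<and> (\<forall>x\<in>S. le x x) \<and> (\<forall>x\<in>S. \<forall>y\<in>S. \<forall>z\<in>S. le x y \<longrightarrow> le y z \<longrightarrow> le x z)
     \<and> (\<forall>x\<in>S. \<forall>y\<in>S. le x y \<longrightarrow> le y x \<longrightarrow> x = y)"

definition ivl :: "'p set \<Rightarrow> ('p \<Rightarrow> 'p \<Rightarrow> bool) \<Rightarrow> 'p \<Rightarrow> 'p \<Rightarrow> 'p set" where
  "ivl S le x y = {z\<in>S. le x z \<and> le z y}"

lemma po_fin: "po S le \<Longrightarrow> finite S" unfolding po_def by blast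
lemma po_refl: "po S le \<Longrightarrow> x \<in> S \<Longrightarrow> le x x" unfolding po_def by blast
lemma po_trans: "po S le \<Longrightarrow> x \<in> S \<Longrightarrow> y \<in> S \<Longrightarrow> z \<in> S \<Longrightarrow> le x y \<Longrightarrow> le y z \<Longrightarrow> le x z"
  unfolding po_def by blast
lemma po_antisym: "po S le \<Longrightarrow> x \<in> S \<Longrightarrow> y \<in> S \<Longrightarrow> le x y \<Longrightarrow> le y x \<Longrightarrow> x = y"
  unfolding po_def by blast

lemma ivl_sub:
  assumes "po S le" "x \<in> S" "z \<in> ivl S le x y" "z \<noteq> y" "y \<in> S"
  shows "ivl S le x z \<subset> ivl S le x y"
proof
  show "ivl S le x z \<subseteq> ivl S le x y"
    using assms po_trans[OF assms(1)] unfolding ivl_def by blast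
  have "y \<in> ivl S le x y" using assms po_refl[OF assms(1)] po_trans[OF assms(1)] unfolding ivl_def by blast
  moreover have "y \<notin> ivl S le x z" using assms po_antisym[OF assms(1), of z y] unfolding ivl_def by auto
  ultimately show "ivl S le x z \<noteq> ivl S le x y" by blast
qed

lemma card_ivl_less:
  assumes "po S le" "x \<in> S" "z \<in> ivl S le x y" "z \<noteq> y" "y \<in> S"
  shows "card (ivl S le x z) < card (ivl S le x y)"
proof -
  have "finite (ivl S le x y)" using po_fin[OF assms(1)] unfolding ivl_def by simp
  then show ?thesis using psubset_card_mono ivl_sub[OF assms] by blast
qed

lemma card_ivl_le: "po S le \<Longrightarrow> card (ivl S le x y) \<le> card S"
  using po_fin unfolding ivl_def by (metis (no_types, lifting) card_mono mem_Collect_eq subsetI)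

lemma fuel_indep:
  assumes "po S le" "x \<in> S"
  shows "y \<in> S \<Longrightarrow> card (ivl S le x y) \<le> Suc k1 \<Longrightarrow> card (ivl S le x y) \<le> Suc k2 \<Longrightarrow>
         mob_fuel k1 S le x y = mob_fuel k2 S le x y"
proof (induction "card (ivl S le x y)" arbitrary: y k1 k2 rule: less_induct)
  case less
  show ?case
  proof (cases "x = y")
    case True then show ?thesis by (cases k1; cases k2) auto
  next
    case False
    show ?thesis
    proof (cases "le x y")
      case nle: False then show ?thesis using False by (cases k1; cases k2) auto
    next
      case True
      have "x \<in> ivl S le x y" "y \<in> ivl S le x y"
        using True assms po_refl[OF assms(1)] less.prems unfolding ivl_def by auto
      moreover have "finite (ivl S le x y)" using po_fin[OF assms(1)] unfolding ivl_def by simp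
      ultimately have "card {x, y} \<le> card (ivl S le x y)" by (intro card_mono) auto
      then have "card (ivl S le x y) \<ge> 2" using False by simp
      then obtain j1 j2 where k: "k1 = Suc j1" "k2 = Suc j2" using less.prems
        by (cases k1; cases k2) auto
      have "mob_fuel j1 S le x z = mob_fuel j2 S le x z" if z: "z \<in> {z\<in>S. le x z \<and> le z y \<and> z \<noteq> y}" for z
      proof -
        have zi: "z \<in> ivl S le x y" "z \<noteq> y" "z \<in> S" using z unfolding ivl_def by auto
        have c: "card (ivl S le x z) < card (ivl S le x y)" using card_ivl_less[OF assms(1,2) zi(1,2) less.prems(1)] .
        show ?thesis using less.hyps[OF c zi(3)] c less.prems k by simp
      qed
      then show ?thesis using k False True by simp
    qed
  qed
qed

lemma mob_rec:
  assumes "po S le" "x \<in> S" "y \<in> S"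
  shows "mobius S le x y = (if x = y then 1 else if le x y then
            - (\<Sum>z\<in>{z\<in>S. le x z \<and> le z y \<and> z \<noteq> y}. mobius S le x z) else 0)"
proof -
  obtain k where k: "card S = Suc k" using assms(2) po_fin[OF assms(1)]
    by (metis card_0_eq empty_iff not0_implies_Suc)
  have e: "mob_fuel k S le x z = mobius S le x z" if "z \<in> S" for z
    unfolding mobius_def using fuel_indep[OF assms(1,2) that, of k "card S"] card_ivl_le[OF assms(1), of x z] k by simp
  have "mobius S le x y = mob_fuel (Suc k) S le x y" unfolding mobius_def k ..
  also have "\<dots> = (if x = y then 1 else if le x y then
            - (\<Sum>z\<in>{z\<in>S. le x z \<and> le z y \<and> z \<noteq> y}. mob_fuel k S le x z) else 0)"
    by (simp only: mob_fuel.simps)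
  also have "\<dots> = (if x = y then 1 else if le x y then
            - (\<Sum>z\<in>{z\<in>S. le x z \<and> le z y \<and> z \<noteq> y}. mobius S le x z) else 0)"
    using e by (intro if_cong refl arg_cong[where f=uminus] sum.cong) auto
  finally show ?thesis .
qed

lemma ivl_split:
  assumes "po S le" "x \<in> S" "y \<in> S" "le x y"
  shows "ivl S le x y = insert y {z\<in>S. le x z \<and> le z y \<and> z \<noteq> y}"
  using assms po_refl[OF assms(1)] unfolding ivl_def by auto

lemma mob_sum:
  assumes "po S le" "x \<in> S" "y \<in> S" "le x y"
  shows "(\<Sum>z\<in>ivl S le x y. mobius S le x z) = (if x = y then 1 else 0)"
proof -
  have fin: "finite {z\<in>S. le x z \<and> le z y \<and> z \<noteq> y}" using po_fin[OF assms(1)] by simp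
  have "(\<Sum>z\<in>ivl S le x y. mobius S le x z) = mobius S le x y + (\<Sum>z\<in>{z\<in>S. le x z \<and> le z y \<and> z \<noteq> y}. mobius S le x z)"
    unfolding ivl_split[OF assms] using fin by (simp add: sum.insert)
  moreover have "x = y \<Longrightarrow> (\<Sum>z\<in>{z\<in>S. le x z \<and> le z y \<and> z \<noteq> y}. mobius S le x z) = 0"
  proof -
    assume "x = y"
    then have "{z\<in>S. le x z \<and> le z y \<and> z \<noteq> y} = {}"
      using po_antisym[OF assms(1)] assms by blast
    then show ?thesis by (metis sum.empty)
  qed
  ultimately show ?thesis using mob_rec[OF assms(1,2,3)] assms(4) by (cases "x = y") auto
qed

lemma mob_unique:
  assumes "po S le" "x \<in> S" "t \<in> S"
    and g: "\<And>y. y \<in> S \<Longrightarrow> le x y \<Longrightarrow> le y t \<Longrightarrow>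
        g y = (if x = y then 1 else - (\<Sum>z\<in>{z\<in>S. le x z \<and> le z y \<and> z \<noteq> y}. g z))"
  shows "y \<in> S \<Longrightarrow> le x y \<Longrightarrow> le y t \<Longrightarrow> g y = mobius S le x y"
proof (induction "card (ivl S le x y)" arbitrary: y rule: less_induct)
  case less
  have "g z = mobius S le x z" if z: "z \<in> {z\<in>S. le x z \<and> le z y \<and> z \<noteq> y}" for z
  proof -
    have zi: "z \<in> ivl S le x y" "z \<noteq> y" "z \<in> S" using z unfolding ivl_def by auto
    have c: "card (ivl S le x z) < card (ivl S le x y)" using card_ivl_less[OF assms(1,2) zi(1,2) less.prems(1)] .
    have "le z t" using po_trans[OF assms(1) zi(3) less.prems(1) assms(3)] z less.prems by blast
    then show ?thesis using less.hyps[OF c zi(3)] z by blast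
  qed
  then have "(\<Sum>z\<in>{z\<in>S. le x z \<and> le z y \<and> z \<noteq> y}. g z) = (\<Sum>z\<in>{z\<in>S. le x z \<and> le z y \<and> z \<noteq> y}. mobius S le x z)"
    by (rule sum.cong[OF refl])
  then show ?case using g[OF less.prems] mob_rec[OF assms(1,2) less.prems(1)] less.prems(2)
    by simp
qed

lemma mob_prod:
  assumes po: "po S le" "po S1 le1" "po S2 le2"
    and t: "t \<in> S" "t1 \<in> S1" "t2 \<in> S2"
    and bij: "bij_betw (\<lambda>z. (p1 z, p2 z)) {z\<in>S. le z t} ({z\<in>S1. le1 z t1} \<times> {z\<in>S2. le2 z t2})"
    and ord: "\<And>x y. x \<in> S \<Longrightarrow> le x t \<Longrightarrow> y \<in> S \<Longrightarrow> le y t \<Longrightarrow> le x y \<longleftrightarrow> le1 (p1 x) (p1 y) \<and> le2 (p2 x) (p2 y)"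
    and pt: "p1 t = t1" "p2 t = t2"
    and x: "x \<in> S" "le x t"
  shows "mobius S le x t = mobius S1 le1 (p1 x) t1 * mobius S2 le2 (p2 x) t2"
proof -
  define g where "g y = mobius S1 le1 (p1 x) (p1 y) * mobius S2 le2 (p2 x) (p2 y)" for y
  have inD: "p1 y \<in> S1 \<and> le1 (p1 y) t1 \<and> p2 y \<in> S2 \<and> le2 (p2 y) t2" if "y \<in> S" "le y t" for y
    using bij_betwE[OF bij] that by auto
  have "g y = (if x = y then 1 else - (\<Sum>z\<in>{z\<in>S. le x z \<and> le z y \<and> z \<noteq> y}. g z))"
    if y: "y \<in> S" "le x y" "le y t" for y
  proof (cases "x = y")
    case True
    then show ?thesis unfolding g_def using mob_rec[OF po(2)] mob_rec[OF po(3)] inD[OF x] by simp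
  next
    case False
    define J where "J = ivl S le x y"
    define J1 where "J1 = ivl S1 le1 (p1 x) (p1 y)"
    define J2 where "J2 = ivl S2 le2 (p2 x) (p2 y)"
    have JD: "z \<in> S \<and> le z t" if "z \<in> J" for z
      using that po_trans[OF po(1) _ y(1) t(1)] y unfolding J_def ivl_def by blast
    have bJ: "bij_betw (\<lambda>z. (p1 z, p2 z)) J (J1 \<times> J2)"
    proof -
      have "J \<subseteq> {z\<in>S. le z t}" using JD by blast
      then have inj: "inj_on (\<lambda>z. (p1 z, p2 z)) J" using bij_betw_imp_inj_on[OF bij] inj_on_subset by blast
      have "(\<lambda>z. (p1 z, p2 z)) ` J = J1 \<times> J2"
      proof (intro equalityI subsetI)
        fix w assume "w \<in> (\<lambda>z. (p1 z, p2 z)) ` J"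
        then obtain z where z: "z \<in> J" "w = (p1 z, p2 z)" by blast
        have "le x z" "le z y" "z \<in> S" using z unfolding J_def ivl_def by auto
        then show "w \<in> J1 \<times> J2" using ord[OF x] ord[OF _ _ y(1,3)] JD[OF z(1)] inD z(2) y
          unfolding J1_def J2_def ivl_def by auto
      next
        fix w assume w: "w \<in> J1 \<times> J2"
        obtain a b where ab: "w = (a, b)" by fastforce
        have a: "a \<in> S1" "le1 (p1 x) a" "le1 a (p1 y)" and b: "b \<in> S2" "le2 (p2 x) b" "le2 b (p2 y)"
          using w ab unfolding J1_def J2_def ivl_def by auto
        have "le1 a t1" using po_trans[OF po(2) a(1) _ t(2) a(3)] inD[OF y(1,3)] by blast
        moreover have "le2 b t2" using po_trans[OF po(3) b(1) _ t(3) b(3)] inD[OF y(1,3)] by blast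
        ultimately have "(a, b) \<in> (\<lambda>z. (p1 z, p2 z)) ` {z\<in>S. le z t}"
          using bij_betw_imp_surj_on[OF bij] a(1) b(1) by blast
        then obtain z where z: "z \<in> S" "le z t" "p1 z = a" "p2 z = b" by auto
        have "le x z" using ord[OF x z(1,2)] a b z by simp
        moreover have "le z y" using ord[OF z(1,2) y(1,3)] a b z by simp
        ultimately show "w \<in> (\<lambda>z. (p1 z, p2 z)) ` J" using z ab unfolding J_def ivl_def by auto
      qed
      then show ?thesis using inj unfolding bij_betw_def by blast
    qed
    have "(\<Sum>z\<in>J. g z) = (\<Sum>w\<in>J1 \<times> J2. mobius S1 le1 (p1 x) (fst w) * mobius S2 le2 (p2 x) (snd w))"
      using sum.reindex_bij_betw[OF bJ, of "\<lambda>w. mobius S1 le1 (p1 x) (fst w) * mobius S2 le2 (p2 x) (snd w)"]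
      unfolding g_def by simp
    also have "\<dots> = (\<Sum>a\<in>J1. mobius S1 le1 (p1 x) a) * (\<Sum>b\<in>J2. mobius S2 le2 (p2 x) b)"
      by (simp add: sum_product sum.cartesian_product case_prod_beta)
    also have "\<dots> = (if p1 x = p1 y then 1 else 0) * (if p2 x = p2 y then 1 else 0)"
    proof -
      have "le1 (p1 x) (p1 y)" "le2 (p2 x) (p2 y)" using ord[OF x y(1,3)] y(2) by auto
      then show ?thesis unfolding J1_def J2_def
        using mob_sum[OF po(2)] mob_sum[OF po(3)] inD[OF x] inD[OF y(1,3)] by simp
    qed
    also have "\<dots> = 0"
    proof -
      have "(p1 x, p2 x) \<noteq> (p1 y, p2 y)"
        using False bij_betw_imp_inj_on[OF bij] x y(1,3) unfolding inj_on_def by blast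
      then show ?thesis by auto
    qed
    finally have s0: "(\<Sum>z\<in>J. g z) = 0" .
    have "J = insert y {z\<in>S. le x z \<and> le z y \<and> z \<noteq> y}"
      unfolding J_def using ivl_split[OF po(1) x(1) y(1,2)] .
    then have "(\<Sum>z\<in>J. g z) = g y + (\<Sum>z\<in>{z\<in>S. le x z \<and> le z y \<and> z \<noteq> y}. g z)"
      using po_fin[OF po(1)] by (simp add: sum.insert)
    then show ?thesis using s0 False by (simp add: eq_neg_iff_add_eq_0)
  qed
  then have "g t = mobius S le x t"
    using mob_unique[OF po(1) x(1) t(1), of g] t(1) x(2) po_refl[OF po(1) t(1)] by blast
  then show ?thesis unfolding g_def using pt by simp
qed

section \<open>Shifts, inner and outer partitions\<close>

definition unsh :: "nat \<Rightarrow> nat \<Rightarrow> nat \<Rightarrow> nat" where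
  "unsh l s j = (if j \<le> l then j else j + s)"

lemma sh_unsh[simp]: "shift_down l s (unsh l s j) = j"
  unfolding shift_down_def unsh_def by auto

lemma unsh_sh: "j \<notin> {l+1..l+s} \<Longrightarrow> unsh l s (shift_down l s j) = j"
  unfolding shift_down_def unsh_def by auto

lemma unsh_mono: "a < b \<Longrightarrow> unsh l s a < unsh l s b"
  unfolding unsh_def by auto

lemma unsh_mono_iff: "unsh l s a < unsh l s b \<longleftrightarrow> a < b"
  unfolding unsh_def by auto

lemma unsh_notin: "unsh l s j \<notin> {l+1..l+s}"
  unfolding unsh_def by auto

lemma unsh_range: "j \<in> {1..n-s} \<Longrightarrow> l + s \<le> n \<Longrightarrow> unsh l s j \<in> {1..n}"
  unfolding unsh_def by auto

lemma sh_range: "j \<in> {1..n} \<Longrightarrow> j \<notin> {l+1..l+s} \<Longrightarrow> l + s \<le> n \<Longrightarrow> shift_down l s j \<in> {1..n-s}"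
  unfolding shift_down_def by auto

lemma sh_img: assumes n: "l + s \<le> n" shows "shift_down l s ` ({1..n} - {l+1..l+s}) = {1..n-s}"
proof (intro equalityI subsetI)
  fix x assume "x \<in> shift_down l s ` ({1..n} - {l+1..l+s})" then show "x \<in> {1..n-s}" using sh_range[OF _ _ n] by auto
next
  fix x assume a: "x \<in> {1..n-s}"
  then have "unsh l s x \<in> {1..n} - {l+1..l+s}" using unsh_range[OF _ n] unsh_notin by blast
  then show "x \<in> shift_down l s ` ({1..n} - {l+1..l+s})" using sh_unsh by (metis image_eqI)
qed

lemma sh_inj: "inj_on (shift_down l s) (- {l+1..l+s})"
  unfolding inj_on_def shift_down_def by auto

lemma sh_mono: "a \<notin> {l+1..l+s} \<Longrightarrow> b \<notin> {l+1..l+s} \<Longrightarrow> a < b \<Longrightarrow> shift_down l s a < shift_down l s b"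
  unfolding shift_down_def by auto

definition splits :: "nat \<Rightarrow> nat \<Rightarrow> nat set set \<Rightarrow> bool" where
  "splits l s P \<longleftrightarrow> (\<forall>V\<in>P. V \<subseteq> {l+1..l+s} \<or> V \<inter> {l+1..l+s} = {})"

definition outer :: "nat \<Rightarrow> nat \<Rightarrow> nat set set \<Rightarrow> nat set set" where
  "outer l s P = (\<lambda>V. shift_down l s ` V) ` {V\<in>P. V \<inter> {l+1..l+s} = {}}"

definition inner :: "nat \<Rightarrow> nat \<Rightarrow> nat set set \<Rightarrow> nat set set" where
  "inner l s P = (\<lambda>V. (\<lambda>j. j - l) ` V) ` {V\<in>P. V \<subseteq> {l+1..l+s}}"

definition comb :: "nat \<Rightarrow> nat \<Rightarrow> nat set set \<Rightarrow> nat set set \<Rightarrow> nat set set" where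
  "comb l s T R = (\<lambda>V. (\<lambda>j. j + l) ` V) ` T \<union> (\<lambda>V. unsh l s ` V) ` R"

lemma sb_Collect: "same_block {V\<in>P. p V} a b \<longleftrightarrow> (\<exists>V\<in>P. p V \<and> a \<in> V \<and> b \<in> V)"
  unfolding same_block_def by auto

lemma outer_part:
  assumes P: "partition_on {1..n} P" and sp: "splits l s P" and n: "l + s \<le> n"
  shows "partition_on {1..n-s} (outer l s P)"
    and "same_block (outer l s P) x y \<longleftrightarrow> x \<in> {1..n-s} \<and> y \<in> {1..n-s} \<and> same_block P (unsh l s x) (unsh l s y)"
proof -
  let ?W = "{l+1..l+s}"
  let ?Q = "{V\<in>P. V \<inter> ?W = {}}"
  have U: "\<Union>?Q = {1..n} - ?W"
  proof (intro equalityI subsetI)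
    fix x assume "x \<in> \<Union>?Q"
    then obtain V where "V \<in> P" "V \<inter> ?W = {}" "x \<in> V" by blast
    then show "x \<in> {1..n} - ?W" using part_sub_A[OF P] by blast
  next
    fix x assume x: "x \<in> {1..n} - ?W"
    then obtain V where V: "V \<in> P" "x \<in> V" using part_cover[OF P] by blast
    then have "V \<inter> ?W = {}" using sp x unfolding splits_def by blast
    then show "x \<in> \<Union>?Q" using V by blast
  qed
  have Qp: "partition_on ({1..n} - ?W) ?Q" using part_sub[OF P, of ?Q] U by auto
  have inj: "inj_on (shift_down l s) ({1..n} - ?W)" using sh_inj inj_on_subset by blast
  show p: "partition_on {1..n-s} (outer l s P)"
    using part_img[OF Qp inj] sh_img[OF n] unfolding outer_def by simp
  show "same_block (outer l s P) x y \<longleftrightarrow> x \<in> {1..n-s} \<and> y \<in> {1..n-s} \<and> same_block P (unsh l s x) (unsh l s y)"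
  proof (cases "x \<in> {1..n-s} \<and> y \<in> {1..n-s}")
    case False then show ?thesis using sb_carrier[OF p] by blast
  next
    case True
    have ux: "unsh l s x \<in> {1..n} - ?W" "unsh l s y \<in> {1..n} - ?W"
      using True unsh_range[OF _ n] unsh_notin by blast+
    have "same_block (outer l s P) x y \<longleftrightarrow> same_block ?Q (unsh l s x) (unsh l s y)"
      using sb_img[OF Qp inj ux] unfolding outer_def by simp
    also have "\<dots> \<longleftrightarrow> same_block P (unsh l s x) (unsh l s y)"
    proof
      assume "same_block ?Q (unsh l s x) (unsh l s y)" then show "same_block P (unsh l s x) (unsh l s y)"
        unfolding same_block_def by blast
    next
      assume h: "same_block P (unsh l s x) (unsh l s y)"
      obtain V where V: "V \<in> P" "unsh l s x \<in> V" "unsh l s y \<in> V" using h unfolding same_block_def by blast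
      then have "V \<inter> ?W = {}" using sp ux unfolding splits_def by blast
      then show "same_block ?Q (unsh l s x) (unsh l s y)" using V unfolding same_block_def by blast
    qed
    finally show ?thesis using True by blast
  qed
qed

lemma inner_part:
  assumes P: "partition_on {1..n} P" and sp: "splits l s P" and n: "l + s \<le> n"
  shows "partition_on {1..s} (inner l s P)"
    and "same_block (inner l s P) x y \<longleftrightarrow> x \<in> {1..s} \<and> y \<in> {1..s} \<and> same_block P (x + l) (y + l)"
proof -
  let ?W = "{l+1..l+s}"
  let ?Q = "{V\<in>P. V \<subseteq> ?W}"
  have U: "\<Union>?Q = ?W"
  proof (intro equalityI subsetI)
    fix x assume "x \<in> \<Union>?Q" then show "x \<in> ?W" by blast
  next
    fix x assume x: "x \<in> ?W"
    then have "x \<in> {1..n}" using n by auto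
    then obtain V where V: "V \<in> P" "x \<in> V" using part_cover[OF P] by blast
    then have "V \<subseteq> ?W" using sp x unfolding splits_def by blast
    then show "x \<in> \<Union>?Q" using V by blast
  qed
  have Qp: "partition_on ?W ?Q" using part_sub[OF P, of ?Q] U by auto
  have inj: "inj_on (\<lambda>j. j - l) ?W" unfolding inj_on_def by auto
  have im: "(\<lambda>j. j - l) ` ?W = {1..s}"
  proof (intro equalityI subsetI)
    fix x assume "x \<in> (\<lambda>j. j - l) ` ?W" then show "x \<in> {1..s}" by auto
  next
    fix x assume "x \<in> {1..s}" then have "x + l \<in> ?W" "x = (x + l) - l" by auto
    then show "x \<in> (\<lambda>j. j - l) ` ?W" by blast
  qed
  show p: "partition_on {1..s} (inner l s P)"
    using part_img[OF Qp inj] im unfolding inner_def by simp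
  show "same_block (inner l s P) x y \<longleftrightarrow> x \<in> {1..s} \<and> y \<in> {1..s} \<and> same_block P (x + l) (y + l)"
  proof (cases "x \<in> {1..s} \<and> y \<in> {1..s}")
    case False then show ?thesis using sb_carrier[OF p] by blast
  next
    case True
    have ux: "x + l \<in> ?W" "y + l \<in> ?W" using True by auto
    have "same_block (inner l s P) x y \<longleftrightarrow> same_block ?Q (x + l) (y + l)"
      using sb_img[OF Qp inj ux] unfolding inner_def by simp
    also have "\<dots> \<longleftrightarrow> same_block P (x + l) (y + l)"
    proof
      assume "same_block ?Q (x + l) (y + l)" then show "same_block P (x + l) (y + l)"
        unfolding same_block_def by blast
    next
      assume h: "same_block P (x + l) (y + l)"
      obtain V where V: "V \<in> P" "x + l \<in> V" "y + l \<in> V" using h unfolding same_block_def by blast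
      then have "V \<subseteq> ?W" using sp ux unfolding splits_def by blast
      then show "same_block ?Q (x + l) (y + l)" using V unfolding same_block_def by blast
    qed
    finally show ?thesis using True by blast
  qed
qed

lemma comb_part:
  assumes T: "partition_on {1..s} T" and R: "partition_on {1..n-s} R" and n: "l + s \<le> n"
  shows "partition_on {1..n} (comb l s T R)"
    and "same_block (comb l s T R) x y \<longleftrightarrow>
          (x \<in> {l+1..l+s} \<and> y \<in> {l+1..l+s} \<and> same_block T (x - l) (y - l)) \<or>
          (x \<in> {1..n} - {l+1..l+s} \<and> y \<in> {1..n} - {l+1..l+s} \<and> same_block R (shift_down l s x) (shift_down l s y))"
proof -
  let ?W = "{l+1..l+s}"
  have inj1: "inj_on (\<lambda>j. j + l) {1..s}" unfolding inj_on_def by auto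
  have im1: "(\<lambda>j. j + l) ` {1..s} = ?W"
  proof (intro equalityI subsetI)
    fix x assume "x \<in> (\<lambda>j. j + l) ` {1..s}" then show "x \<in> ?W" by auto
  next
    fix x assume "x \<in> ?W" then have "x - l \<in> {1..s}" "x = (x - l) + l" by auto
    then show "x \<in> (\<lambda>j. j + l) ` {1..s}" by blast
  qed
  have inj2: "inj_on (unsh l s) {1..n-s}" using sh_unsh by (metis inj_on_inverseI)
  have im2: "unsh l s ` {1..n-s} = {1..n} - ?W"
  proof (intro equalityI subsetI)
    fix x assume "x \<in> unsh l s ` {1..n-s}" then show "x \<in> {1..n} - ?W" using unsh_range[OF _ n] unsh_notin by blast
  next
    fix x assume x: "x \<in> {1..n} - ?W" then have "shift_down l s x \<in> {1..n-s}" "x = unsh l s (shift_down l s x)"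
      using sh_range[OF _ _ n] unsh_sh by auto
    then show "x \<in> unsh l s ` {1..n-s}" by blast
  qed
  have p1: "partition_on ?W ((\<lambda>V. (\<lambda>j. j + l) ` V) ` T)" using part_img[OF T inj1] unfolding im1 .
  have p2: "partition_on ({1..n} - ?W) ((\<lambda>V. unsh l s ` V) ` R)" using part_img[OF R inj2] unfolding im2 .
  have "?W \<union> ({1..n} - ?W) = {1..n}" using n by auto
  then show p: "partition_on {1..n} (comb l s T R)"
    using part_union[OF p1 p2] unfolding comb_def by auto
  have s1: "same_block ((\<lambda>V. (\<lambda>j. j + l) ` V) ` T) x y \<longleftrightarrow> x \<in> ?W \<and> y \<in> ?W \<and> same_block T (x - l) (y - l)"
  proof (cases "x \<in> ?W \<and> y \<in> ?W")
    case False then show ?thesis using sb_carrier[OF p1] by blast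
  next
    case True
    then have "x - l \<in> {1..s}" "y - l \<in> {1..s}" "x = (x - l) + l" "y = (y - l) + l" by auto
    then show ?thesis using sb_img[OF T inj1, of "x - l" "y - l"] True by simp
  qed
  have s2: "same_block ((\<lambda>V. unsh l s ` V) ` R) x y \<longleftrightarrow> x \<in> {1..n} - ?W \<and> y \<in> {1..n} - ?W \<and> same_block R (shift_down l s x) (shift_down l s y)"
  proof (cases "x \<in> {1..n} - ?W \<and> y \<in> {1..n} - ?W")
    case False then show ?thesis using sb_carrier[OF p2] by blast
  next
    case True
    then have "shift_down l s x \<in> {1..n-s}" "shift_down l s y \<in> {1..n-s}"
      "x = unsh l s (shift_down l s x)" "y = unsh l s (shift_down l s y)"
      using sh_range[OF _ _ n] unsh_sh by auto
    then show ?thesis using sb_img[OF R inj2, of "shift_down l s x" "shift_down l s y"] True by metis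
  qed
  show "same_block (comb l s T R) x y \<longleftrightarrow>
          (x \<in> ?W \<and> y \<in> ?W \<and> same_block T (x - l) (y - l)) \<or>
          (x \<in> {1..n} - ?W \<and> y \<in> {1..n} - ?W \<and> same_block R (shift_down l s x) (shift_down l s y))"
    unfolding comb_def sb_union s1 s2 ..
qed

lemma splits_block:
  assumes P: "partition_on A P" and W: "{l+1..l+s} \<in> P"
  shows "splits l s P"
  unfolding splits_def
proof
  fix V assume V: "V \<in> P"
  show "V \<subseteq> {l+1..l+s} \<or> V \<inter> {l+1..l+s} = {}"
  proof (cases "V = {l+1..l+s}")
    case False then have "V \<inter> {l+1..l+s} = {}" using part_uniq[OF P V W] by blast
    then show ?thesis by blast
  qed simp
qed

lemma splits_refine:
  assumes P: "partition_on A P" and W: "{l+1..l+s} \<in> P" and r: "\<And>x y. same_block S x y \<Longrightarrow> same_block P x y"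
  shows "splits l s S"
  unfolding splits_def
proof
  fix V assume V: "V \<in> S"
  show "V \<subseteq> {l+1..l+s} \<or> V \<inter> {l+1..l+s} = {}"
  proof (cases "V \<inter> {l+1..l+s} = {}")
    case False
    then obtain x where x: "x \<in> V" "x \<in> {l+1..l+s}" by blast
    have "y \<in> {l+1..l+s}" if "y \<in> V" for y
    proof -
      have "same_block S x y" using V x that unfolding same_block_def by blast
      then have "same_block P x y" using r by blast
      then show ?thesis using block_sb[OF P W x(2)] by blast
    qed
    then show ?thesis by blast
  qed simp
qed

lemma outer_NC:
  assumes P: "NCs n P" and sp: "splits l s P" and n: "l + s \<le> n"
  shows "NCs (n-s) (outer l s P)"
proof -
  have p: "partition_on {1..n} P" using NCs_part[OF P] .
  note ch = outer_part(2)[OF p sp n]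
  show ?thesis unfolding NCs_def
  proof (intro conjI allI impI outer_part(1)[OF p sp n])
    fix a b c d assume h: "a < b \<and> b < c \<and> c < d \<and> same_block (outer l s P) a c \<and> same_block (outer l s P) b d"
    then have "same_block P (unsh l s a) (unsh l s b)"
      using NCsD[OF P unsh_mono unsh_mono unsh_mono] ch by blast
    then show "same_block (outer l s P) a b" using ch h by blast
  qed
qed

lemma outer_INC:
  assumes P: "partition_on {1..n} P" "INCc \<chi> P" and sp: "splits l s P" and n: "l + s \<le> n"
  shows "INCc (\<lambda>j. \<chi> (unsh l s j)) (outer l s P)"
  unfolding INCc_def
proof (intro allI impI)
  note ch = outer_part(2)[OF P(1) sp n]
  fix v1 w v2 assume h: "v1 < w \<and> w < v2 \<and> same_block (outer l s P) v1 v2 \<and> \<chi> (unsh l s w) = FaceB"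
  then have w: "w \<in> {1..n-s}" using ch by auto
  have "same_block P (unsh l s w) (unsh l s v1)"
    using INCcD[OF P(2) unsh_mono unsh_mono] h ch by blast
  then show "same_block (outer l s P) w v1" using ch h w by blast
qed

lemma inner_NC:
  assumes P: "NCs n P" and sp: "splits l s P" and n: "l + s \<le> n"
  shows "NCs s (inner l s P)"
proof -
  have p: "partition_on {1..n} P" using NCs_part[OF P] .
  note ch = inner_part(2)[OF p sp n]
  show ?thesis unfolding NCs_def
  proof (intro conjI allI impI inner_part(1)[OF p sp n])
    fix a b c d assume h: "a < b \<and> b < c \<and> c < d \<and> same_block (inner l s P) a c \<and> same_block (inner l s P) b d"
    then have "same_block P (a + l) (b + l)"
      using NCsD[OF P, of "a+l" "b+l" "c+l" "d+l"] ch by auto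
    then show "same_block (inner l s P) a b" using ch h by blast
  qed
qed

lemma inner_INC:
  assumes P: "partition_on {1..n} P" "INCc \<chi> P" and sp: "splits l s P" and n: "l + s \<le> n"
  shows "INCc (\<lambda>j. \<chi> (j + l)) (inner l s P)"
  unfolding INCc_def
proof (intro allI impI)
  note ch = inner_part(2)[OF P(1) sp n]
  fix v1 w v2 assume h: "v1 < w \<and> w < v2 \<and> same_block (inner l s P) v1 v2 \<and> \<chi> (w + l) = FaceB"
  then have w: "w \<in> {1..s}" using ch by auto
  have "same_block P (w + l) (v1 + l)"
    using INCcD[OF P(2), of "v1 + l" "w + l" "v2 + l"] h ch by auto
  then show "same_block (inner l s P) w v1" using ch h w by blast
qed

lemma comb_NC:
  assumes T: "NCs s T" and R: "NCs (n-s) R" and n: "l + s \<le> n"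
  shows "NCs n (comb l s T R)"
proof -
  note ch = comb_part(2)[OF NCs_part[OF T] NCs_part[OF R] n]
  show ?thesis unfolding NCs_def
  proof (intro conjI allI impI comb_part(1)[OF NCs_part[OF T] NCs_part[OF R] n])
    fix a b c d assume h: "a < b \<and> b < c \<and> c < d \<and> same_block (comb l s T R) a c \<and> same_block (comb l s T R) b d"
    then have ac: "(a \<in> {l+1..l+s} \<and> c \<in> {l+1..l+s} \<and> same_block T (a - l) (c - l)) \<or>
          (a \<in> {1..n} - {l+1..l+s} \<and> c \<in> {1..n} - {l+1..l+s} \<and> same_block R (shift_down l s a) (shift_down l s c))"
      and bd: "(b \<in> {l+1..l+s} \<and> d \<in> {l+1..l+s} \<and> same_block T (b - l) (d - l)) \<or>
          (b \<in> {1..n} - {l+1..l+s} \<and> d \<in> {1..n} - {l+1..l+s} \<and> same_block R (shift_down l s b) (shift_down l s d))"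
      using ch by blast+
    show "same_block (comb l s T R) a b"
    proof (cases "a \<in> {l+1..l+s}")
      case True
      then have ac': "a \<in> {l+1..l+s} \<and> c \<in> {l+1..l+s} \<and> same_block T (a - l) (c - l)" using ac by blast
      then have b: "b \<in> {l+1..l+s}" using h by auto
      then have bd': "b \<in> {l+1..l+s} \<and> d \<in> {l+1..l+s} \<and> same_block T (b - l) (d - l)" using bd by blast
      have "same_block T (a - l) (b - l)"
        using NCsD[OF T, of "a - l" "b - l" "c - l" "d - l"] ac' bd' h by auto
      then show ?thesis using ch ac' b by blast
    next
      case False
      then have ac': "a \<in> {1..n} - {l+1..l+s} \<and> c \<in> {1..n} - {l+1..l+s} \<and> same_block R (shift_down l s a) (shift_down l s c)"
        using ac by blast
      have bd': "b \<in> {1..n} - {l+1..l+s} \<and> d \<in> {1..n} - {l+1..l+s} \<and> same_block R (shift_down l s b) (shift_down l s d)"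
      proof -
        have "\<not> (b \<in> {l+1..l+s} \<and> d \<in> {l+1..l+s})" using ac' h by auto
        then show ?thesis using bd by blast
      qed
      have "same_block R (shift_down l s a) (shift_down l s b)"
        using NCsD[OF R sh_mono sh_mono sh_mono] ac' bd' h by blast
      then show ?thesis using ch ac' bd' by blast
    qed
  qed
qed

lemma comb_INC:
  assumes T: "partition_on {1..s} T" "INCc (\<lambda>j. \<chi> (j + l)) T"
    and R: "partition_on {1..n-s} R" "INCc (\<lambda>j. \<chi> (unsh l s j)) R"
    and n: "l + s \<le> n"
    and PP: "partition_on {1..n} PP" "INCc \<chi> PP" "{l+1..l+s} \<in> PP"
    and r: "\<And>x y. same_block R x y \<Longrightarrow> same_block (outer l s PP) x y"
  shows "INCc \<chi> (comb l s T R)"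
  unfolding INCc_def
proof (intro allI impI)
  note ch = comb_part(2)[OF T(1) R(1) n]
  have spPi: "splits l s PP" using splits_block[OF PP(1,3)] .
  note chPi = outer_part(2)[OF PP(1) spPi n]
  fix v1 w v2 assume h: "v1 < w \<and> w < v2 \<and> same_block (comb l s T R) v1 v2 \<and> \<chi> w = FaceB"
  then have c: "(v1 \<in> {l+1..l+s} \<and> v2 \<in> {l+1..l+s} \<and> same_block T (v1 - l) (v2 - l)) \<or>
          (v1 \<in> {1..n} - {l+1..l+s} \<and> v2 \<in> {1..n} - {l+1..l+s} \<and> same_block R (shift_down l s v1) (shift_down l s v2))"
    using ch by blast
  show "same_block (comb l s T R) w v1"
  proof (cases "v1 \<in> {l+1..l+s}")
    case True
    then have c': "v1 \<in> {l+1..l+s} \<and> v2 \<in> {l+1..l+s} \<and> same_block T (v1 - l) (v2 - l)" using c by blast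
    then have w: "w \<in> {l+1..l+s}" using h by auto
    have "same_block T (w - l) (v1 - l)"
      using INCcD[OF T(2), of "v1 - l" "w - l" "v2 - l"] c' h w by auto
    then show ?thesis using ch w c' by blast
  next
    case False
    then have c': "v1 \<in> {1..n} - {l+1..l+s} \<and> v2 \<in> {1..n} - {l+1..l+s} \<and> same_block R (shift_down l s v1) (shift_down l s v2)"
      using c by blast
    have "same_block (outer l s PP) (shift_down l s v1) (shift_down l s v2)" using r c' by blast
    then have "same_block PP v1 v2" using chPi unsh_sh c' by (metis DiffD2)
    then have sw: "same_block PP w v1" using INCcD[OF PP(2)] h by blast
    have wn: "w \<notin> {l+1..l+s}"
    proof
      assume "w \<in> {l+1..l+s}"
      then have "v1 \<in> {l+1..l+s}" using block_sb[OF PP(1,3)] sw by blast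
      then show False using c' by blast
    qed
    then have w: "w \<in> {1..n} - {l+1..l+s}" using h c' by auto
    have "same_block R (shift_down l s w) (shift_down l s v1)"
      using INCcD[OF R(2) sh_mono sh_mono] c' h w unsh_sh[OF wn] by (metis DiffD2)
    then show ?thesis using ch w c' by blast
  qed
qed

section \<open>Interval blocks\<close>

lemma interval_block:
  assumes P: "NCs n P" and ne: "P \<noteq> {{1..n}}" and n: "n \<ge> 1"
  shows "\<exists>l s. {l+1..l+s} \<in> P \<and> 1 \<le> s \<and> l + s < n"
proof -
  have p: "partition_on {1..n} P" using NCs_part[OF P] .
  have fin: "finite V" if "V \<in> P" for V using part_sub_A[OF p that] finite_subset by blast
  obtain B where B: "B \<in> P" "n \<in> B" using part_cover[OF p, of n] n by auto
  have "\<exists>V\<in>P. n \<notin> V"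
  proof (rule ccontr)
    assume "\<not> (\<exists>V\<in>P. n \<notin> V)"
    then have all: "\<And>V. V \<in> P \<Longrightarrow> V = B" using part_uniq[OF p _ B(1) _ B(2)] by blast
    then have "P = {B}" using B(1) by blast
    then have "B = {1..n}" using partition_onD1[OF p] by simp
    then show False using ne \<open>P = {B}\<close> by simp
  qed
  then obtain V0 where "V0 \<in> P" "n \<notin> V0" by blast
  then obtain V where V: "V \<in> P" "n \<notin> V"
      and min: "\<And>X. X \<in> P \<Longrightarrow> n \<notin> X \<Longrightarrow> Max V - Min V \<le> Max X - Min X"
    using ex_has_least_nat[of "\<lambda>V. V \<in> P \<and> n \<notin> V" V0 "\<lambda>V. Max V - Min V"] by blast
  have Vne: "V \<noteq> {}" using part_ne[OF p V(1)] .
  have VA: "V \<subseteq> {1..n}" using part_sub_A[OF p V(1)] .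
  define a where "a = Min V"
  define b where "b = Max V"
  have aV: "a \<in> V" and bV: "b \<in> V" using Vne fin[OF V(1)] unfolding a_def b_def by auto
  have ab: "\<And>x. x \<in> V \<Longrightarrow> a \<le> x \<and> x \<le> b" using fin[OF V(1)] unfolding a_def b_def by auto
  have "b \<le> n" using bV VA by auto
  moreover have "b \<noteq> n" using bV V(2) by blast
  ultimately have bn: "b < n" by simp
  have a1: "a \<ge> 1" using aV VA by auto
  have sab: "same_block P a b" using aV bV V(1) unfolding same_block_def by blast
  have gap: "x \<in> V" if x: "a < x" "x < b" for x
  proof (rule ccontr)
    assume xV: "x \<notin> V"
    have "x \<in> {1..n}" using x a1 bn by auto
    then obtain X where X: "X \<in> P" "x \<in> X" using part_cover[OF p] by blast
    have XV: "X \<noteq> V" using X xV by blast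
    have notx: "\<not> same_block P a x" using block_sb[OF p V(1) aV] xV by blast
    show False
    proof (cases "n \<in> X")
      case True
      have "same_block P x n" using X True unfolding same_block_def by blast
      then have "same_block P a x" using NCsD[OF P x(1) x(2) bn sab] by blast
      then show False using notx by blast
    next
      case False
      have inside: "a < y \<and> y < b" if y: "y \<in> X" for y
      proof -
        have sxy: "same_block P x y" "same_block P y x" using X y unfolding same_block_def by blast+
        have ya: "y \<noteq> a" "y \<noteq> b" using y aV bV part_uniq[OF p X(1) V(1)] XV by blast+
        have "\<not> y < a"
        proof
          assume "y < a"
          then have "same_block P y a" using NCsD[OF P _ x(1) x(2) sxy(2) sab] by blast
          then have "a \<in> X" using block_sb[OF p X(1) y] by blast
          then show False using aV part_uniq[OF p X(1) V(1)] XV by blast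
        qed
        moreover have "\<not> y > b"
        proof
          assume "y > b"
          then have "same_block P a x" using NCsD[OF P x(1) x(2) _ sab sxy(1)] by blast
          then show False using notx by blast
        qed
        ultimately show ?thesis using ya by auto
      qed
      have Xne: "X \<noteq> {}" using X by blast
      have "Max X < b" "Min X > a" using inside fin[OF X(1)] Xne by auto
      then have "Max X - Min X < b - a" using Min_le[OF fin[OF X(1)] X(2)] Max_ge[OF fin[OF X(1)] X(2)] by linarith
      then show False using min[OF X(1) False] unfolding a_def b_def by linarith
    qed
  qed
  have "V = {a..b}"
  proof (intro equalityI subsetI)
    fix x assume "x \<in> V" then show "x \<in> {a..b}" using ab by auto
  next
    fix x assume "x \<in> {a..b}"
    then show "x \<in> V" using gap aV bV by (cases "x = a"; cases "x = b") auto
  qed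
  then have "{(a - 1) + 1..(a - 1) + (b - a + 1)} \<in> P" using V(1) a1 ab[OF aV] ab[OF bV] by (simp add: le_imp_diff_is_add)
  moreover have "(a - 1) + (b - a + 1) < n" using bn a1 ab[OF aV] by linarith
  ultimately show ?thesis by (intro exI[of _ "a - 1"] exI[of _ "b - a + 1"]) auto
qed

lemma comb_inner_outer:
  assumes P: "partition_on {1..n} P" and sp: "splits l s P" and n: "l + s \<le> n"
  shows "comb l s (inner l s P) (outer l s P) = P"
proof (rule part_eq[OF comb_part(1)[OF inner_part(1)[OF P sp n] outer_part(1)[OF P sp n] n] P])
  fix x y assume xy: "x \<in> {1..n}" "y \<in> {1..n}"
  note chc = comb_part(2)[OF inner_part(1)[OF P sp n] outer_part(1)[OF P sp n] n]
  note chi = inner_part(2)[OF P sp n]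
  note cho = outer_part(2)[OF P sp n]
  show "same_block (comb l s (inner l s P) (outer l s P)) x y \<longleftrightarrow> same_block P x y"
  proof (cases "x \<in> {l+1..l+s}")
    case True
    have "same_block P x y \<Longrightarrow> y \<in> {l+1..l+s}"
    proof -
      assume "same_block P x y"
      then obtain V where "V \<in> P" "x \<in> V" "y \<in> V" unfolding same_block_def by blast
      then show ?thesis using sp True unfolding splits_def by blast
    qed
    then show ?thesis using chc chi True xy by auto
  next
    case False
    have "same_block P x y \<Longrightarrow> y \<notin> {l+1..l+s}"
    proof -
      assume "same_block P x y"
      then obtain V where "V \<in> P" "x \<in> V" "y \<in> V" unfolding same_block_def by blast
      then show ?thesis using sp False unfolding splits_def by blast
    qed
    moreover have "x \<notin> {l+1..l+s} \<Longrightarrow> x \<in> {1..n} \<Longrightarrow> shift_down l s x \<in> {1..n-s}" for x using sh_range[OF _ _ n] by blast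
    ultimately show ?thesis using chc cho False xy unsh_sh by auto
  qed
qed

lemma splits_comb: assumes that: "partition_on {1..s} T" shows "splits l s (comb l s T R)"
  unfolding splits_def comb_def
proof
  fix V assume "V \<in> (\<lambda>V. (\<lambda>j. j + l) ` V) ` T \<union> (\<lambda>V. unsh l s ` V) ` R"
  then show "V \<subseteq> {l+1..l+s} \<or> V \<inter> {l+1..l+s} = {}"
  proof
    assume "V \<in> (\<lambda>V. (\<lambda>j. j + l) ` V) ` T"
    then obtain U where "U \<in> T" "V = (\<lambda>j. j + l) ` U" by blast
    then have "V \<subseteq> {l+1..l+s}" using part_sub_A[OF that \<open>U \<in> T\<close>] by auto
    then show ?thesis by blast
  next
    assume "V \<in> (\<lambda>V. unsh l s ` V) ` R"
    then show ?thesis using unsh_notin by blast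
  qed
qed

lemma inner_comb:
  assumes T: "partition_on {1..s} T" and R: "partition_on {1..n-s} R" and n: "l + s \<le> n"
  shows "inner l s (comb l s T R) = T"
proof -
  have C: "partition_on {1..n} (comb l s T R)" using comb_part(1)[OF T R n] .
  note sp = splits_comb[OF T, where R=R and l=l]
  show ?thesis
  proof (rule part_eq[OF inner_part(1)[OF C sp n] T])
    fix x y assume "x \<in> {1..s}" "y \<in> {1..s}"
    then show "same_block (inner l s (comb l s T R)) x y \<longleftrightarrow> same_block T x y"
      using inner_part(2)[OF C sp n] comb_part(2)[OF T R n] by auto
  qed
qed

lemma outer_comb:
  assumes T: "partition_on {1..s} T" and R: "partition_on {1..n-s} R" and n: "l + s \<le> n"
  shows "outer l s (comb l s T R) = R"
proof -
  have C: "partition_on {1..n} (comb l s T R)" using comb_part(1)[OF T R n] .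
  note sp = splits_comb[OF T, where R=R and l=l]
  show ?thesis
  proof (rule part_eq[OF outer_part(1)[OF C sp n] R])
    fix x y assume xy: "x \<in> {1..n-s}" "y \<in> {1..n-s}"
    then have "unsh l s x \<in> {1..n} - {l+1..l+s}" "unsh l s y \<in> {1..n} - {l+1..l+s}"
      using unsh_range[OF _ n] unsh_notin by blast+
    then show "same_block (outer l s (comb l s T R)) x y \<longleftrightarrow> same_block R x y"
      using outer_part(2)[OF C sp n] comb_part(2)[OF T R n] xy unsh_notin by auto
  qed
qed

lemma sb_order_split:
  assumes P1: "partition_on {1..n} P1" "splits l s P1" and P2: "partition_on {1..n} P2" "splits l s P2"
    and n: "l + s \<le> n"
  shows "(\<forall>x y. same_block P1 x y \<longrightarrow> same_block P2 x y) \<longleftrightarrow>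
         (\<forall>x y. same_block (inner l s P1) x y \<longrightarrow> same_block (inner l s P2) x y) \<and>
         (\<forall>x y. same_block (outer l s P1) x y \<longrightarrow> same_block (outer l s P2) x y)"
proof -
  have c1: "comb l s (inner l s P1) (outer l s P1) = P1" using comb_inner_outer P1 n by blast
  have c2: "comb l s (inner l s P2) (outer l s P2) = P2" using comb_inner_outer P2 n by blast
  have e1: "same_block P1 x y \<longleftrightarrow> (x \<in> {l+1..l+s} \<and> y \<in> {l+1..l+s} \<and> same_block (inner l s P1) (x - l) (y - l)) \<or>
          (x \<in> {1..n} - {l+1..l+s} \<and> y \<in> {1..n} - {l+1..l+s} \<and> same_block (outer l s P1) (shift_down l s x) (shift_down l s y))"
    and e2: "same_block P2 x y \<longleftrightarrow> (x \<in> {l+1..l+s} \<and> y \<in> {l+1..l+s} \<and> same_block (inner l s P2) (x - l) (y - l)) \<or>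
          (x \<in> {1..n} - {l+1..l+s} \<and> y \<in> {1..n} - {l+1..l+s} \<and> same_block (outer l s P2) (shift_down l s x) (shift_down l s y))"
    for x y
    using comb_part(2)[OF inner_part(1)[OF P1 n] outer_part(1)[OF P1 n] n, of x y]
      comb_part(2)[OF inner_part(1)[OF P2 n] outer_part(1)[OF P2 n] n, of x y] unfolding c1 c2 by blast+
  note i1 = inner_part(2)[OF P1 n] and i2 = inner_part(2)[OF P2 n]
  note o1 = outer_part(2)[OF P1 n] and o2 = outer_part(2)[OF P2 n]
  show ?thesis
  proof
    assume h: "\<forall>x y. same_block P1 x y \<longrightarrow> same_block P2 x y"
    have A: "same_block (inner l s P2) x y" if "same_block (inner l s P1) x y" for x y
    proof -
      have "x \<in> {1..s}" "y \<in> {1..s}" "same_block P1 (x + l) (y + l)" using that i1 by blast+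
      then show ?thesis using h i2 by blast
    qed
    have B: "same_block (outer l s P2) x y" if "same_block (outer l s P1) x y" for x y
    proof -
      have "x \<in> {1..n-s}" "y \<in> {1..n-s}" "same_block P1 (unsh l s x) (unsh l s y)" using that o1 by blast+
      then show ?thesis using h o2 by blast
    qed
    show "(\<forall>x y. same_block (inner l s P1) x y \<longrightarrow> same_block (inner l s P2) x y) \<and>
         (\<forall>x y. same_block (outer l s P1) x y \<longrightarrow> same_block (outer l s P2) x y)"
      using A B by blast
  next
    assume h: "(\<forall>x y. same_block (inner l s P1) x y \<longrightarrow> same_block (inner l s P2) x y) \<and>
         (\<forall>x y. same_block (outer l s P1) x y \<longrightarrow> same_block (outer l s P2) x y)"
    show "\<forall>x y. same_block P1 x y \<longrightarrow> same_block P2 x y"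
    proof (intro allI impI)
      fix x y assume "same_block P1 x y"
      then have "(x \<in> {l+1..l+s} \<and> y \<in> {l+1..l+s} \<and> same_block (inner l s P1) (x - l) (y - l)) \<or>
          (x \<in> {1..n} - {l+1..l+s} \<and> y \<in> {1..n} - {l+1..l+s} \<and> same_block (outer l s P1) (shift_down l s x) (shift_down l s y))"
        using e1 by blast
      then have "(x \<in> {l+1..l+s} \<and> y \<in> {l+1..l+s} \<and> same_block (inner l s P2) (x - l) (y - l)) \<or>
          (x \<in> {1..n} - {l+1..l+s} \<and> y \<in> {1..n} - {l+1..l+s} \<and> same_block (outer l s P2) (shift_down l s x) (shift_down l s y))"
        using h by blast
      then show "same_block P2 x y" using e2 by blast
    qed
  qed
qed

section \<open>Refinement order on INC\<close>

lemma INC_part: "P \<in> INC n \<chi> \<Longrightarrow> partition_on {1..n} P"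
  using INC_iff NCs_part by blast

lemma refines_po: "po (INC n \<chi>) refines"
  unfolding po_def
proof (intro conjI ballI impI)
  show "finite (INC n \<chi>)"
    using finitely_many_partition_on[of "{1..n}"] INC_part by (metis finite_subset mem_Collect_eq subsetI finite_atLeastAtMost)
next
  fix x assume "x \<in> INC n \<chi>" then show "refines x x" unfolding Defs.refines_def by blast
next
  fix x y z assume "refines x y" "refines y z" then show "refines x z" unfolding Defs.refines_def by (meson order_trans)
next
  fix x y assume xy: "x \<in> INC n \<chi>" "y \<in> INC n \<chi>" "refines x y" "refines y x"
  have px: "partition_on {1..n} x" and py: "partition_on {1..n} y" using xy INC_part by blast+
  show "x = y"
    using part_eq[OF px py] refines_iff[OF px py] refines_iff[OF py px] xy(3,4) by blast
qed

lemma one_part_INC: "n \<ge> 1 \<Longrightarrow> {{1..n}} \<in> INC n \<chi>"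
  unfolding INC_iff NCs_def INCc_def
proof (intro conjI allI impI)
  assume "n \<ge> 1"
  then show p: "partition_on {1..n} {{1..n}}" by (intro partition_on_space) auto
  fix a b c d assume "a < b \<and> b < c \<and> c < d \<and> same_block {{1..n}} a c \<and> same_block {{1..n}} b d"
  then show "same_block {{1..n}} a b" unfolding same_block_def by auto
next
  fix v1 w v2 assume "v1 < w \<and> w < v2 \<and> same_block {{1..n}} v1 v2 \<and> \<chi> w = FaceB"
  then show "same_block {{1..n}} w v1" unfolding same_block_def by auto
qed

lemma refines_one: "partition_on {1..n} P \<Longrightarrow> refines P {{1..n}}"
  unfolding Defs.refines_def using part_sub_A by blast

locale blk =
  fixes n l s :: nat and \<chi> :: "nat \<Rightarrow> side" and PP :: "nat set set"
  assumes PP: "PP \<in> INC n \<chi>" and W: "{l+1..l+s} \<in> PP" and s1: "1 \<le> s" and n: "l + s < n"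
begin

abbreviation "\<chi>W \<equiv> (\<lambda>j. \<chi> (j + l))"
abbreviation "\<chi>O \<equiv> (\<lambda>j. \<chi> (unsh l s j))"

lemma nle: "l + s \<le> n" using n by simp

lemma PPp: "partition_on {1..n} PP" using INC_part[OF PP] .
lemma PPI: "INCc \<chi> PP" using PP INC_iff by blast
lemma spPP: "splits l s PP" using splits_block[OF PPp W] .

lemma outerPP: "outer l s PP \<in> INC (n-s) \<chi>O"
  unfolding INC_iff using outer_NC[OF _ spPP nle] outer_INC[OF PPp PPI spPP nle] PP INC_iff by blast

lemma innerPP: "inner l s PP = {{1..s}}"
proof -
  have "{V\<in>PP. V \<subseteq> {l+1..l+s}} = {{l+1..l+s}}"
  proof (intro equalityI subsetI)
    fix V assume V: "V \<in> {V\<in>PP. V \<subseteq> {l+1..l+s}}"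
    then obtain x where "x \<in> V" using part_ne[OF PPp] by blast
    then show "V \<in> {{l+1..l+s}}" using part_uniq[OF PPp _ W] V by blast
  qed (use W in auto)
  moreover have "(\<lambda>j. j - l) ` {l+1..l+s} = {1..s}"
  proof (intro equalityI subsetI)
    fix x assume "x \<in> (\<lambda>j. j - l) ` {l+1..l+s}" then show "x \<in> {1..s}" by auto
  next
    fix x assume "x \<in> {1..s}" then have "x + l \<in> {l+1..l+s}" "x = (x + l) - l" by auto
    then show "x \<in> (\<lambda>j. j - l) ` {l+1..l+s}" by blast
  qed
  ultimately show ?thesis unfolding inner_def by simp
qed

lemma D_facts:
  assumes z: "z \<in> INC n \<chi>" "refines z PP"
  shows "partition_on {1..n} z" "splits l s z" "\<And>x y. same_block z x y \<Longrightarrow> same_block PP x y"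
proof -
  show p: "partition_on {1..n} z" using INC_part[OF z(1)] .
  show r: "\<And>x y. same_block z x y \<Longrightarrow> same_block PP x y" using refines_iff[OF p PPp] z(2) by blast
  show "splits l s z" using splits_refine[OF PPp W r] .
qed

lemma inner_D:
  assumes z: "z \<in> INC n \<chi>" "refines z PP"
  shows "inner l s z \<in> INC s \<chi>W" "refines (inner l s z) {{1..s}}"
proof -
  note f = D_facts[OF z]
  show "inner l s z \<in> INC s \<chi>W"
    unfolding INC_iff using inner_NC[OF _ f(2) nle] inner_INC[OF f(1) _ f(2) nle] z(1) INC_iff by blast
  show "refines (inner l s z) {{1..s}}" using refines_one inner_part(1)[OF f(1,2) nle] by blast
qed

lemma outer_D:
  assumes z: "z \<in> INC n \<chi>" "refines z PP"
  shows "outer l s z \<in> INC (n-s) \<chi>O" "refines (outer l s z) (outer l s PP)"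
proof -
  note f = D_facts[OF z]
  show "outer l s z \<in> INC (n-s) \<chi>O"
    unfolding INC_iff using outer_NC[OF _ f(2) nle] outer_INC[OF f(1) _ f(2) nle] z(1) INC_iff by blast
  have "same_block (outer l s PP) x y" if "same_block (outer l s z) x y" for x y
    using that outer_part(2)[OF f(1,2) nle] outer_part(2)[OF PPp spPP nle] f(3) by blast
  then show "refines (outer l s z) (outer l s PP)"
    using refines_iff[OF outer_part(1)[OF f(1,2) nle] outer_part(1)[OF PPp spPP nle]] by blast
qed

lemma comb_D:
  assumes T: "T \<in> INC s \<chi>W" and R: "R \<in> INC (n-s) \<chi>O" "refines R (outer l s PP)"
  shows "comb l s T R \<in> INC n \<chi>" "refines (comb l s T R) PP"
    "inner l s (comb l s T R) = T" "outer l s (comb l s T R) = R"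
proof -
  have Tp: "partition_on {1..s} T" and Rp: "partition_on {1..n-s} R" using INC_part T R by blast+
  have Rr: "\<And>x y. same_block R x y \<Longrightarrow> same_block (outer l s PP) x y"
    using refines_iff[OF Rp outer_part(1)[OF PPp spPP nle]] R(2) by blast
  show "comb l s T R \<in> INC n \<chi>"
    unfolding INC_iff
    using comb_NC[of s T n R l] comb_INC[OF Tp _ Rp _ nle PPp PPI W Rr] T R(1) INC_iff nle by blast
  have Cp: "partition_on {1..n} (comb l s T R)" using comb_part(1)[OF Tp Rp nle] .
  have "same_block PP x y" if "same_block (comb l s T R) x y" for x y
  proof -
    have "(x \<in> {l+1..l+s} \<and> y \<in> {l+1..l+s} \<and> same_block T (x - l) (y - l)) \<or>
          (x \<in> {1..n} - {l+1..l+s} \<and> y \<in> {1..n} - {l+1..l+s} \<and> same_block R (shift_down l s x) (shift_down l s y))"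
      using comb_part(2)[OF Tp Rp nle] that by blast
    then show ?thesis
    proof
      assume "x \<in> {l+1..l+s} \<and> y \<in> {l+1..l+s} \<and> same_block T (x - l) (y - l)"
      then show ?thesis using W unfolding same_block_def by blast
    next
      assume h: "x \<in> {1..n} - {l+1..l+s} \<and> y \<in> {1..n} - {l+1..l+s} \<and> same_block R (shift_down l s x) (shift_down l s y)"
      then have "same_block (outer l s PP) (shift_down l s x) (shift_down l s y)" using Rr by blast
      then have "same_block PP (unsh l s (shift_down l s x)) (unsh l s (shift_down l s y))"
        using outer_part(2)[OF PPp spPP nle] by blast
      then show ?thesis using unsh_sh h by (metis DiffD2)
    qed
  qed
  then show "refines (comb l s T R) PP" using refines_iff[OF Cp PPp] by blast
  show "inner l s (comb l s T R) = T" using inner_comb[OF Tp Rp nle] .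
  show "outer l s (comb l s T R) = R" using outer_comb[OF Tp Rp nle] .
qed

lemma decomp_bij:
  "bij_betw (\<lambda>z. (inner l s z, outer l s z)) {z\<in>INC n \<chi>. refines z PP}
     ({z\<in>INC s \<chi>W. refines z {{1..s}}} \<times> {z\<in>INC (n-s) \<chi>O. refines z (outer l s PP)})"
  unfolding bij_betw_def
proof
  show "inj_on (\<lambda>z. (inner l s z, outer l s z)) {z\<in>INC n \<chi>. refines z PP}"
  proof (rule inj_onI)
    fix x y assume x: "x \<in> {z\<in>INC n \<chi>. refines z PP}" and y: "y \<in> {z\<in>INC n \<chi>. refines z PP}"
      and e: "(inner l s x, outer l s x) = (inner l s y, outer l s y)"
    have x': "x \<in> INC n \<chi>" "refines x PP" and y': "y \<in> INC n \<chi>" "refines y PP" using x y by auto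
    have "x = comb l s (inner l s x) (outer l s x)" using comb_inner_outer[OF D_facts(1,2)[OF x'] nle] by simp
    also have "\<dots> = comb l s (inner l s y) (outer l s y)" using e by simp
    also have "\<dots> = y" using comb_inner_outer[OF D_facts(1,2)[OF y'] nle] by simp
    finally show "x = y" .
  qed
  show "(\<lambda>z. (inner l s z, outer l s z)) ` {z\<in>INC n \<chi>. refines z PP} =
     {z\<in>INC s \<chi>W. refines z {{1..s}}} \<times> {z\<in>INC (n-s) \<chi>O. refines z (outer l s PP)}"
  proof (intro equalityI subsetI)
    fix w assume "w \<in> (\<lambda>z. (inner l s z, outer l s z)) ` {z\<in>INC n \<chi>. refines z PP}"
    then show "w \<in> {z\<in>INC s \<chi>W. refines z {{1..s}}} \<times> {z\<in>INC (n-s) \<chi>O. refines z (outer l s PP)}"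
      using inner_D outer_D by auto
  next
    fix w assume w: "w \<in> {z\<in>INC s \<chi>W. refines z {{1..s}}} \<times> {z\<in>INC (n-s) \<chi>O. refines z (outer l s PP)}"
    obtain T R where TR: "w = (T, R)" by fastforce
    have T: "T \<in> INC s \<chi>W" and R: "R \<in> INC (n-s) \<chi>O" "refines R (outer l s PP)" using w TR by auto
    note c = comb_D[OF T R]
    show "w \<in> (\<lambda>z. (inner l s z, outer l s z)) ` {z\<in>INC n \<chi>. refines z PP}"
      using c TR by (intro image_eqI[of _ _ "comb l s T R"]) auto
  qed
qed

lemma decomp_ord:
  assumes x: "x \<in> INC n \<chi>" "refines x PP" and y: "y \<in> INC n \<chi>" "refines y PP"
  shows "refines x y \<longleftrightarrow> refines (inner l s x) (inner l s y) \<and> refines (outer l s x) (outer l s y)"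
proof -
  note fx = D_facts[OF x] and fy = D_facts[OF y]
  show ?thesis
    using sb_order_split[OF fx(1,2) fy(1,2) nle] refines_iff[OF fx(1) fy(1)]
      refines_iff[OF inner_part(1)[OF fx(1,2) nle] inner_part(1)[OF fy(1,2) nle]]
      refines_iff[OF outer_part(1)[OF fx(1,2) nle] outer_part(1)[OF fy(1,2) nle]] by simp
qed

lemma mu_factor:
  assumes x: "x \<in> INC n \<chi>" "refines x PP"
  shows "mu_INC n \<chi> x PP = mu_INC s \<chi>W (inner l s x) (one_part s) * mu_INC (n-s) \<chi>O (outer l s x) (outer l s PP)"
  unfolding mu_INC_def one_part_def
  by (rule mob_prod[OF refines_po refines_po refines_po PP one_part_INC[OF s1] outerPP decomp_bij
        decomp_ord innerPP refl x])

end

definition collv :: "nat \<Rightarrow> nat \<Rightarrow> 'a::ring_1 \<Rightarrow> 'a list \<Rightarrow> 'a list" where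
  "collv l s b xs = take l xs @ [b * xs ! (l + s)] @ drop (l + s + 1) xs"

definition sub :: "nat \<Rightarrow> nat \<Rightarrow> 'a list \<Rightarrow> 'a list" where
  "sub l s xs = take s (drop l xs)"

lemma collv_length: "l + s < length xs \<Longrightarrow> length (collv l s b xs) = length xs - s"
  unfolding collv_def by simp

lemma collv_nth:
  assumes "l + s < length xs" "j < length xs - s"
  shows "collv l s b xs ! j = (if j < l then xs ! j else if j = l then b * xs ! (l + s) else xs ! (j + s))"
proof -
  have lt: "length (take l xs) = l" using assms by simp
  consider "j < l" | "j = l" | "j > l" by linarith
  then show ?thesis
  proof cases
    case 1 then show ?thesis unfolding collv_def using lt by (simp add: nth_append)
  next
    case 2 then show ?thesis unfolding collv_def using lt by (simp add: nth_append)
  next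
    case 3
    then have "collv l s b xs ! j = drop (l + s + 1) xs ! (j - l - 1)"
      unfolding collv_def using lt by (simp add: nth_append)
    also have "\<dots> = xs ! (j + s)" using assms 3 by (simp add: add.commute)
    finally show ?thesis using 3 by simp
  qed
qed

lemma sub_length: "l + s \<le> length xs \<Longrightarrow> length (sub l s xs) = s"
  unfolding sub_def by simp

lemma sub_nth: "l + s \<le> length xs \<Longrightarrow> i < s \<Longrightarrow> sub l s xs ! i = xs ! (l + i)"
  unfolding sub_def by simp

lemma sub_Cons: "l + s \<le> length xs \<Longrightarrow> 1 \<le> s \<Longrightarrow> sub l s xs = xs ! l # sub (l + 1) (s - 1) xs"
  by (rule nth_equalityI) (auto simp: sub_length sub_nth nth_Cons split: nat.split)

lemma step_outer:
  assumes P: "partition_on A P" and W: "{l+1..l+s} \<in> P" and s: "1 \<le> s"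
  shows "(\<lambda>V. shift_down l s ` V) ` (P - {{l+1..l+s}}) = outer l s P"
proof -
  have "P - {{l+1..l+s}} = {V\<in>P. V \<inter> {l+1..l+s} = {}}"
  proof (intro equalityI subsetI)
    fix V assume V: "V \<in> P - {{l+1..l+s}}"
    then have "V \<inter> {l+1..l+s} = {}" using part_uniq[OF P _ W] by blast
    then show "V \<in> {V\<in>P. V \<inter> {l+1..l+s} = {}}" using V by blast
  next
    fix V assume "V \<in> {V\<in>P. V \<inter> {l+1..l+s} = {}}"
    moreover have "{l+1..l+s} \<inter> {l+1..l+s} \<noteq> {}" using s by auto
    ultimately show "V \<in> P - {{l+1..l+s}}" by auto
  qed
  then show ?thesis unfolding outer_def by simp
qed

lemma step_sd: "take l xs @ [E (prod_list (take s (drop l xs))) * xs ! (l + s)] @ drop (l + s + 1) xs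
   = collv l s (E (prod_list (sub l s xs))) xs"
  unfolding collv_def sub_def ..

lemma nested_step':
  assumes P: "partition_on {1..length xs} P" and "{l+1..l+s} \<in> P" "1 \<le> s" "l + s < length xs"
    and "nested_rel E (outer l s P) (collv l s (E (prod_list (sub l s xs))) xs) v"
  shows "nested_rel E P xs v"
  using nested_rel.step[of l s P xs E v] assms step_outer[OF P assms(2,3)] step_sd by metis

lemma nested_exists:
  "NCs (length xs) P \<Longrightarrow> xs \<noteq> [] \<Longrightarrow> \<exists>v. nested_rel E P xs v"
proof (induction "length xs" arbitrary: xs P rule: less_induct)
  case less
  show ?case
  proof (cases "P = {{1..length xs}}")
    case True then show ?thesis using nested_rel.full[OF less.prems(2), of E] by blast
  next
    case False
    have n1: "length xs \<ge> 1" using less.prems(2) by (cases xs) auto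
    obtain l s where ls: "{l+1..l+s} \<in> P" "1 \<le> s" "l + s < length xs"
      using interval_block[OF less.prems(1) False n1] by blast
    have p: "partition_on {1..length xs} P" using NCs_part[OF less.prems(1)] .
    let ?ys = "collv l s (E (prod_list (sub l s xs))) xs"
    have len: "length ?ys = length xs - s" using collv_length[OF ls(3)] .
    have nc: "NCs (length ?ys) (outer l s P)"
      using outer_NC[OF less.prems(1) splits_block[OF p ls(1)]] ls len by simp
    have "?ys \<noteq> []" using len ls by auto
    moreover have "length ?ys < length xs" using len ls by auto
    ultimately obtain v where "nested_rel E (outer l s P) ?ys v"
      using less.hyps[of ?ys, OF _ nc] by blast
    then show ?thesis using nested_step'[OF p ls] by blast
  qed
qed

lemma nested_E: "nested_rel E P xs v \<Longrightarrow> \<exists>y. v = E y"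
  by (induction rule: nested_rel.induct) auto

section \<open>Commutation of two reductions\<close>

lemma sh_interval:
  assumes "l1 + s1 \<le> l2"
  shows "shift_down l1 s1 ` {l2+1..l2+s2} = {(l2-s1)+1..(l2-s1)+s2}"
proof (intro equalityI subsetI)
  fix x assume "x \<in> shift_down l1 s1 ` {l2+1..l2+s2}"
  then show "x \<in> {(l2-s1)+1..(l2-s1)+s2}" using assms unfolding shift_down_def by auto
next
  fix x assume x: "x \<in> {(l2-s1)+1..(l2-s1)+s2}"
  then have "x + s1 \<in> {l2+1..l2+s2}" "shift_down l1 s1 (x + s1) = x" using assms unfolding shift_down_def by auto
  then show "x \<in> shift_down l1 s1 ` {l2+1..l2+s2}" by (metis image_eqI)
qed

lemma sh_interval_left:
  assumes "l1 + s1 \<le> l2"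
  shows "shift_down l2 s2 ` {l1+1..l1+s1} = {l1+1..l1+s1}"
proof -
  have "shift_down l2 s2 x = x" if "x \<in> {l1+1..l1+s1}" for x using that assms unfolding shift_down_def by auto
  then have "shift_down l2 s2 ` {l1+1..l1+s1} = id ` {l1+1..l1+s1}" by (intro image_cong) auto
  then show ?thesis by simp
qed

lemma unsh_comm: "l1 + s1 \<le> l2 \<Longrightarrow> unsh l1 s1 (unsh (l2 - s1) s2 x) = unsh l2 s2 (unsh l1 s1 x)"
  unfolding unsh_def by auto

lemma comm_part:
  assumes P: "partition_on {1..n} P" and W1: "{l1+1..l1+s1} \<in> P" and W2: "{l2+1..l2+s2} \<in> P"
    and s: "1 \<le> s1" "1 \<le> s2" and ll: "l1 + s1 \<le> l2" and n: "l2 + s2 \<le> n"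
  shows "{(l2-s1)+1..(l2-s1)+s2} \<in> outer l1 s1 P"
    and "{l1+1..l1+s1} \<in> outer l2 s2 P"
    and "outer (l2-s1) s2 (outer l1 s1 P) = outer l1 s1 (outer l2 s2 P)"
proof -
  have d: "{l2+1..l2+s2} \<inter> {l1+1..l1+s1} = {}" using ll by auto
  have m2: "{l2+1..l2+s2} \<in> {V\<in>P. V \<inter> {l1+1..l1+s1} = {}}" using W2 d by simp
  have m1: "{l1+1..l1+s1} \<in> {V\<in>P. V \<inter> {l2+1..l2+s2} = {}}" using W1 d by (simp add: Int_commute)
  have e2: "{(l2-s1)+1..(l2-s1)+s2} = shift_down l1 s1 ` {l2+1..l2+s2}" using sh_interval[OF ll, of s2] by simp
  have e1: "{l1+1..l1+s1} = shift_down l2 s2 ` {l1+1..l1+s1}" using sh_interval_left[OF ll, of s2] by simp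
  show i: "{(l2-s1)+1..(l2-s1)+s2} \<in> outer l1 s1 P"
    unfolding outer_def using image_eqI[where f="\<lambda>V. shift_down l1 s1 ` V", OF e2 m2] .
  show ii: "{l1+1..l1+s1} \<in> outer l2 s2 P"
    unfolding outer_def using image_eqI[where f="\<lambda>V. shift_down l2 s2 ` V", OF e1 m1] .
  have n1: "l1 + s1 \<le> n" "l2 + s2 \<le> n" using ll n by auto
  note sp1 = splits_block[OF P W1] and sp2 = splits_block[OF P W2]
  have P1: "partition_on {1..n-s1} (outer l1 s1 P)" using outer_part(1)[OF P sp1 n1(1)] .
  have P2: "partition_on {1..n-s2} (outer l2 s2 P)" using outer_part(1)[OF P sp2 n1(2)] .
  have sp1': "splits (l2-s1) s2 (outer l1 s1 P)" using splits_block[OF P1 i] .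
  have sp2': "splits l1 s1 (outer l2 s2 P)" using splits_block[OF P2 ii] .
  have m1: "(l2 - s1) + s2 \<le> n - s1" and m2: "l1 + s1 \<le> n - s2" using ll n by auto
  have e: "n - s2 - s1 = n - s1 - s2" by simp
  have L: "partition_on {1..n-s1-s2} (outer (l2-s1) s2 (outer l1 s1 P))" using outer_part(1)[OF P1 sp1' m1] .
  have R: "partition_on {1..n-s1-s2} (outer l1 s1 (outer l2 s2 P))" using outer_part(1)[OF P2 sp2' m2] e by simp
  show "outer (l2-s1) s2 (outer l1 s1 P) = outer l1 s1 (outer l2 s2 P)"
  proof (rule part_eq[OF L R])
    fix x y assume xy: "x \<in> {1..n-s1-s2}" "y \<in> {1..n-s1-s2}"
    have r1: "unsh (l2-s1) s2 x \<in> {1..n-s1}" "unsh (l2-s1) s2 y \<in> {1..n-s1}"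
      using unsh_range[OF _ m1] xy by auto
    have r2: "unsh l1 s1 x \<in> {1..n-s2}" "unsh l1 s1 y \<in> {1..n-s2}"
      using unsh_range[OF _ m2] xy e by auto
    have "same_block (outer (l2-s1) s2 (outer l1 s1 P)) x y \<longleftrightarrow>
          same_block P (unsh l1 s1 (unsh (l2-s1) s2 x)) (unsh l1 s1 (unsh (l2-s1) s2 y))"
      using outer_part(2)[OF P1 sp1' m1] outer_part(2)[OF P sp1 n1(1)] xy r1 by auto
    moreover have "same_block (outer l1 s1 (outer l2 s2 P)) x y \<longleftrightarrow>
          same_block P (unsh l2 s2 (unsh l1 s1 x)) (unsh l2 s2 (unsh l1 s1 y))"
      using outer_part(2)[OF P2 sp2' m2] outer_part(2)[OF P sp2 n1(2)] xy r2 e by auto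
    ultimately show "same_block (outer (l2-s1) s2 (outer l1 s1 P)) x y \<longleftrightarrow> same_block (outer l1 s1 (outer l2 s2 P)) x y"
      using unsh_comm[OF ll] by simp
  qed
qed

locale Ectx =
  fixes E :: "'a::ring_1 \<Rightarrow> 'a" and Bs :: "'a set"
  assumes E_add: "E (x + y) = E x + E y"
    and E_in: "E x \<in> Bs"
    and E_left: "b \<in> Bs \<Longrightarrow> E (b * x) = b * E x"
    and Bs_int: "of_int c \<in> Bs"
    and Bs_add: "x \<in> Bs \<Longrightarrow> y \<in> Bs \<Longrightarrow> x + y \<in> Bs"
    and Bs_mult: "x \<in> Bs \<Longrightarrow> y \<in> Bs \<Longrightarrow> x * y \<in> Bs"
begin

lemma E_EE: "E (E y * x) = E y * E x" using E_left[OF E_in] .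

lemma comm_list:
  assumes len: "length xs = n" and s: "1 \<le> s1" "1 \<le> s2" and ll: "l1 + s1 \<le> l2" and n: "l2 + s2 < n"
  defines "xs1 \<equiv> collv l1 s1 (E (prod_list (sub l1 s1 xs))) xs"
    and "xs2 \<equiv> collv l2 s2 (E (prod_list (sub l2 s2 xs))) xs"
  shows "collv (l2-s1) s2 (E (prod_list (sub (l2-s1) s2 xs1))) xs1 = collv l1 s1 (E (prod_list (sub l1 s1 xs2))) xs2"
proof -
  define E1 where "E1 = E (prod_list (sub l1 s1 xs))"
  define E2 where "E2 = E (prod_list (sub l2 s2 xs))"
  have c1: "l1 + s1 < length xs" and c2: "l2 + s2 < length xs" using ll n len by auto
  have len1: "length xs1 = n - s1" and len2: "length xs2 = n - s2"
    unfolding xs1_def xs2_def using collv_length c1 c2 len by auto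
  have n1: "xs1 ! j = (if j < l1 then xs ! j else if j = l1 then E1 * xs ! (l1 + s1) else xs ! (j + s1))"
    if "j < n - s1" for j using collv_nth[OF c1] that len unfolding xs1_def E1_def by simp
  have n2: "xs2 ! j = (if j < l2 then xs ! j else if j = l2 then E2 * xs ! (l2 + s2) else xs ! (j + s2))"
    if "j < n - s2" for j using collv_nth[OF c2] that len unfolding xs2_def E2_def by simp
  have c1': "(l2 - s1) + s2 < length xs1" using len1 ll n by auto
  have c2': "l1 + s1 < length xs2" using len2 ll n by auto
  have sub2: "sub l1 s1 xs2 = sub l1 s1 xs"
    by (rule nth_equalityI) (use c2' c1 n2 ll len2 in \<open>auto simp: sub_length sub_nth\<close>)
  have EE2: "E (prod_list (sub l1 s1 xs2)) = E1" unfolding sub2 E1_def ..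
  show ?thesis
  proof (cases "l1 + s1 = l2")
    case adj: True
    have sub1: "sub (l2 - s1) s2 xs1 = (E1 * xs ! l2) # sub (l2 + 1) (s2 - 1) xs"
    proof (rule nth_equalityI)
      show "length (sub (l2 - s1) s2 xs1) = length ((E1 * xs ! l2) # sub (l2 + 1) (s2 - 1) xs)"
        using c1' c2 s by (simp add: sub_length)
      fix i assume i: "i < length (sub (l2 - s1) s2 xs1)"
      then have i': "i < s2" using c1' by (simp add: sub_length)
      show "sub (l2 - s1) s2 xs1 ! i = ((E1 * xs ! l2) # sub (l2 + 1) (s2 - 1) xs) ! i"
      proof (cases i)
        case 0
        have l21: "l2 - s1 = l1" "l1 < n - s1" using adj n s by auto
        then show ?thesis using sub_nth[OF less_imp_le[OF c1'] i'] n1[of l1] adj 0 by simp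
      next
        case (Suc k)
        have l21: "l2 - s1 = l1" using adj by simp
        have "sub (l2 - s1) s2 xs1 ! i = xs1 ! (l1 + i)" using sub_nth[OF less_imp_le[OF c1'] i'] unfolding l21 .
        also have "\<dots> = xs ! (l1 + i + s1)" using n1[of "l1 + i"] Suc c1' i' adj len1 by auto
        also have "\<dots> = sub (l2 + 1) (s2 - 1) xs ! k" using sub_nth[of "l2+1" "s2-1" xs k] c2 Suc i' adj by (simp add: add.commute add.left_commute)
        finally show ?thesis using Suc by simp
      qed
    qed
    have EE1: "E (prod_list (sub (l2 - s1) s2 xs1)) = E1 * E2"
    proof -
      have "E (prod_list (sub (l2 - s1) s2 xs1)) = E (E1 * (xs ! l2 * prod_list (sub (l2 + 1) (s2 - 1) xs)))"
        unfolding sub1 by (simp add: mult.assoc)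
      also have "\<dots> = E1 * E (xs ! l2 * prod_list (sub (l2 + 1) (s2 - 1) xs))" unfolding E1_def by (rule E_EE)
      also have "xs ! l2 * prod_list (sub (l2 + 1) (s2 - 1) xs) = prod_list (sub l2 s2 xs)"
        using sub_Cons[of l2 s2 xs] c2 s by simp
      finally show ?thesis unfolding E2_def .
    qed
    show ?thesis
    proof (rule nth_equalityI)
      show "length (collv (l2 - s1) s2 (E (prod_list (sub (l2 - s1) s2 xs1))) xs1) =
            length (collv l1 s1 (E (prod_list (sub l1 s1 xs2))) xs2)"
        using collv_length[OF c1'] collv_length[OF c2'] len1 len2 by simp
      fix j assume j: "j < length (collv (l2 - s1) s2 (E (prod_list (sub (l2 - s1) s2 xs1))) xs1)"
      then have j': "j < n - s1 - s2" using collv_length[OF c1'] len1 by simp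
      have L: "collv (l2 - s1) s2 (E (prod_list (sub (l2 - s1) s2 xs1))) xs1 ! j =
              (if j < l1 then xs1 ! j else if j = l1 then (E1 * E2) * xs1 ! (l1 + s2) else xs1 ! (j + s2))"
      proof -
        have l21: "l2 - s1 = l1" using adj by simp
        show ?thesis using collv_nth[OF c1', of j] j' len1 EE1 unfolding l21 by simp
      qed
      have R: "collv l1 s1 (E (prod_list (sub l1 s1 xs2))) xs2 ! j =
              (if j < l1 then xs2 ! j else if j = l1 then E1 * xs2 ! (l1 + s1) else xs2 ! (j + s1))"
        using collv_nth[OF c2', of j] j' len2 EE2 by simp
      consider "j < l1" | "j = l1" | "j > l1" by linarith
      then show "collv (l2 - s1) s2 (E (prod_list (sub (l2 - s1) s2 xs1))) xs1 ! j =
            collv l1 s1 (E (prod_list (sub l1 s1 xs2))) xs2 ! j"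
      proof cases
        case 1 then show ?thesis using L R n1[of j] n2[of j] j' adj by simp
      next
        case 2
        have a: "l1 + s2 < n - s1" "l2 < n - s2" "\<not> l1 + s2 < l1" "l1 + s2 \<noteq> l1" using adj j' n s by auto
        have e: "l1 + s2 + s1 = l2 + s2" using adj by simp
        have b: "xs1 ! (l1 + s2) = xs ! (l2 + s2)" using n1[OF a(1)] a(3,4) e by simp
        have c: "xs2 ! (l1 + s1) = E2 * xs ! (l2 + s2)" using n2[OF a(2)] adj by simp
        show ?thesis using L R b c 2 by (simp add: mult.assoc)
      next
        case 3 then show ?thesis using L R n1[of "j + s2"] n2[of "j + s1"] j' adj s
          by (simp add: add.commute add.left_commute)
      qed
    qed
  next
    case nadj: False
    then have ll': "l1 + s1 < l2" using ll by simp
    have sub1: "sub (l2 - s1) s2 xs1 = sub l2 s2 xs"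
      by (rule nth_equalityI) (use c1' c2 n1 ll' len1 in \<open>auto simp: sub_length sub_nth\<close>)
    have EE1: "E (prod_list (sub (l2 - s1) s2 xs1)) = E2" unfolding sub1 E2_def ..
    show ?thesis
    proof (rule nth_equalityI)
      show "length (collv (l2 - s1) s2 (E (prod_list (sub (l2 - s1) s2 xs1))) xs1) =
            length (collv l1 s1 (E (prod_list (sub l1 s1 xs2))) xs2)"
        using collv_length[OF c1'] collv_length[OF c2'] len1 len2 by simp
      fix j assume j: "j < length (collv (l2 - s1) s2 (E (prod_list (sub (l2 - s1) s2 xs1))) xs1)"
      then have j': "j < n - s1 - s2" using collv_length[OF c1'] len1 by simp
      have L: "collv (l2 - s1) s2 (E (prod_list (sub (l2 - s1) s2 xs1))) xs1 ! j =
              (if j < l2 - s1 then xs1 ! j else if j = l2 - s1 then E2 * xs1 ! (l2 - s1 + s2) else xs1 ! (j + s2))"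
        using collv_nth[OF c1', of j] j' len1 EE1 by simp
      have R: "collv l1 s1 (E (prod_list (sub l1 s1 xs2))) xs2 ! j =
              (if j < l1 then xs2 ! j else if j = l1 then E1 * xs2 ! (l1 + s1) else xs2 ! (j + s1))"
        using collv_nth[OF c2', of j] j' len2 EE2 by simp
      consider "j < l1" | "j = l1" | "l1 < j" "j < l2 - s1" | "j = l2 - s1" | "j > l2 - s1" using ll' by linarith
      then show "collv (l2 - s1) s2 (E (prod_list (sub (l2 - s1) s2 xs1))) xs1 ! j =
            collv l1 s1 (E (prod_list (sub l1 s1 xs2))) xs2 ! j"
      proof cases
        case 1
        have a: "j < l2 - s1" "j < n - s1" "j < n - s2" "j < l2" using 1 ll' j' by auto
        then show ?thesis using L R n1[of j] n2[of j] 1 by simp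
      next
        case 2
        have a: "j < l2 - s1" "j < n - s1" "l1 + s1 < n - s2" "l1 + s1 < l2" using 2 ll' j' n by auto
        then show ?thesis using L R n1[of j] n2[of "l1 + s1"] 2 by simp
      next
        case 3
        have a: "j + s1 < l2" "j < n - s1" "j + s1 < n - s2" using 3 j' ll' by auto
        then show ?thesis using L R n1[of j] n2[of "j + s1"] 3 by simp
      next
        case 4
        have a: "\<not> l2 - s1 < l1" "l2 - s1 \<noteq> l1" "l2 - s1 + s1 = l2" "l2 - s1 + s2 < n - s1"
          "\<not> l2 - s1 + s2 < l1" "l2 - s1 + s2 \<noteq> l1" "l2 - s1 + s2 + s1 = l2 + s2" "l2 < n - s2"
          using ll' s n by auto
        have b: "xs1 ! (l2 - s1 + s2) = xs ! (l2 + s2)" using n1[OF a(4)] a(5,6,7) by simp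
        have c: "xs2 ! l2 = E2 * xs ! (l2 + s2)" using n2[OF a(8)] by simp
        show ?thesis using L R b c a(1,2,3) 4 by simp
      next
        case 5
        have a: "\<not> j < l2 - s1" "j \<noteq> l2 - s1" "\<not> j < l1" "j \<noteq> l1" "j + s2 < n - s1" "j + s1 < n - s2"
          "\<not> j + s2 < l1" "j + s2 \<noteq> l1" "\<not> j + s1 < l2" "j + s1 \<noteq> l2" "j + s2 + s1 = j + s1 + s2"
          using 5 ll' s j' by auto
        have b: "xs1 ! (j + s2) = xs ! (j + s1 + s2)" using n1[OF a(5)] a(7,8,11) by simp
        have c: "xs2 ! (j + s1) = xs ! (j + s1 + s2)" using n2[OF a(6)] a(9,10) by simp
        show ?thesis using L R b c a(1-4) by simp
      qed
    qed
  qed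
qed

end

lemma nested_inv:
  assumes "nested_rel E P xs v" "partition_on {1..length xs} P"
  shows "(P = {{1..length xs}} \<and> v = E (prod_list xs)) \<or>
         (\<exists>l s. {l+1..l+s} \<in> P \<and> 1 \<le> s \<and> l + s < length xs \<and>
            nested_rel E (outer l s P) (collv l s (E (prod_list (sub l s xs))) xs) v)"
  using assms(1)
proof (cases rule: nested_rel.cases)
  case full then show ?thesis by blast
next
  case (step l s)
  then show ?thesis using step_outer[OF assms(2) step(1,2)] step_sd by metis
qed

lemma full_no_interval:
  assumes "{l+1..l+s} \<in> {{1..n}}" "1 \<le> s" "l + s < (n::nat)"
  shows False
proof -
  have "{l+1..l+s} = {1..n}" using assms(1) by blast
  moreover have "n \<in> {1..n}" using assms(2,3) by auto
  moreover have "n \<notin> {l+1..l+s}" using assms(3) by simp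
  ultimately show False by blast
qed

lemma one_NCs: "n \<ge> 1 \<Longrightarrow> NCs n {{1..n}}"
  using one_part_INC INC_iff by blast

context Ectx
begin

lemma nested_unique:
  "NCs (length xs) P \<Longrightarrow> nested_rel E P xs v1 \<Longrightarrow> nested_rel E P xs v2 \<Longrightarrow> v1 = v2"
proof (induction "length xs" arbitrary: xs P v1 v2 rule: less_induct)
  case less
  define n where "n = length xs"
  have p: "partition_on {1..n} P" using NCs_part[OF less.prems(1)] unfolding n_def .
  have key: "va = vb"
    if a: "{la+1..la+sa} \<in> P" "1 \<le> sa" "la + sa < n"
        "nested_rel E (outer la sa P) (collv la sa (E (prod_list (sub la sa xs))) xs) va"
    and b: "{lb+1..lb+sb} \<in> P" "1 \<le> sb" "lb + sb < n"
        "nested_rel E (outer lb sb P) (collv lb sb (E (prod_list (sub lb sb xs))) xs) vb"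
    and lt: "la < lb"
    for la sa va lb sb vb
  proof -
    have ll: "la + sa \<le> lb"
    proof (rule ccontr)
      assume "\<not> la + sa \<le> lb"
      then have "lb + 1 \<in> {la+1..la+sa}" "lb + 1 \<in> {lb+1..lb+sb}" using lt b(2) by auto
      then have "{la+1..la+sa} = {lb+1..lb+sb}" using part_uniq[OF p a(1) b(1)] by blast
      moreover have "la + 1 \<in> {la+1..la+sa}" "la + 1 \<notin> {lb+1..lb+sb}" using a(2) lt by auto
      ultimately show False by blast
    qed
    note cp = comm_part[OF p a(1) b(1) a(2) b(2) ll less_imp_le[OF b(3)]]
    define xs1 where "xs1 = collv la sa (E (prod_list (sub la sa xs))) xs"
    define xs2 where "xs2 = collv lb sb (E (prod_list (sub lb sb xs))) xs"
    define xs12 where "xs12 = collv (lb-sa) sb (E (prod_list (sub (lb-sa) sb xs1))) xs1"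
    have len1: "length xs1 = n - sa" unfolding xs1_def n_def using collv_length a(3) n_def by simp
    have len2: "length xs2 = n - sb" unfolding xs2_def n_def using collv_length b(3) n_def by simp
    have c1: "(lb - sa) + sb < length xs1" using len1 ll b(3) by simp
    have len12: "length xs12 = n - sa - sb" unfolding xs12_def using collv_length[OF c1] len1 by simp
    have NC1: "NCs (length xs1) (outer la sa P)"
      using outer_NC[OF less.prems(1) splits_block[OF p a(1)]] a(3) len1 n_def by simp
    have NC2: "NCs (length xs2) (outer lb sb P)"
      using outer_NC[OF less.prems(1) splits_block[OF p b(1)]] b(3) len2 n_def by simp
    have NC12: "NCs (length xs12) (outer (lb-sa) sb (outer la sa P))"
      using outer_NC[OF NC1 splits_block[OF NCs_part[OF NC1] cp(1)]] c1 len12 len1 by simp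
    have "xs12 \<noteq> []" using len12 ll b(3) by auto
    then obtain v where v: "nested_rel E (outer (lb-sa) sb (outer la sa P)) xs12 v"
      using nested_exists[OF NC12] by blast
    have r1: "nested_rel E (outer la sa P) xs1 v"
      using nested_step'[OF NCs_part[OF NC1] cp(1) b(2) c1] v unfolding xs12_def by blast
    have c2: "la + sa < length xs2" using len2 ll b(3) by simp
    have e: "xs12 = collv la sa (E (prod_list (sub la sa xs2))) xs2"
      using comm_list[of xs n sa sb la lb] a(2) b(2) ll b(3) n_def
      unfolding xs12_def xs1_def xs2_def by simp
    have r2: "nested_rel E (outer lb sb P) xs2 v"
      using nested_step'[OF NCs_part[OF NC2] cp(2) a(2) c2] v cp(3) e by simp
    have "va = v" using less.hyps[OF _ NC1 _ r1] a(4) a(2,3) len1 n_def unfolding xs1_def by simp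
    moreover have "vb = v" using less.hyps[OF _ NC2 _ r2] b(4) b(2,3) len2 n_def unfolding xs2_def by simp
    ultimately show ?thesis by simp
  qed
  have s: "v = vb" if a: "{la+1..la+sa} \<in> P" "1 \<le> sa" "la + sa < n"
        "nested_rel E (outer la sa P) (collv la sa (E (prod_list (sub la sa xs))) xs) v"
    and b: "{la+1..la+sb} \<in> P" "1 \<le> sb" "la + sb < n"
        "nested_rel E (outer la sb P) (collv la sb (E (prod_list (sub la sb xs))) xs) vb"
    for la sa v sb vb
  proof -
    have m: "la + 1 \<in> {la+1..la+sa}" "la + 1 \<in> {la+1..la+sb}" using a(2) b(2) by auto
    have eq: "{la+1..la+sa} = {la+1..la+sb}" using part_uniq[OF p a(1) b(1) m] .
    have "la + sa \<in> {la+1..la+sa}" "la + sb \<in> {la+1..la+sb}" using a(2) b(2) by auto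
    then have "la + sa \<le> la + sb" "la + sb \<le> la + sa" using eq by auto
    then have "sa = sb" by simp
    with b(4) have b4: "nested_rel E (outer la sa P) (collv la sa (E (prod_list (sub la sa xs))) xs) vb" by simp
    have a3: "la + sa < length xs" using a(3) n_def by simp
    have NCo: "NCs (length (collv la sa (E (prod_list (sub la sa xs))) xs)) (outer la sa P)"
      using outer_NC[OF less.prems(1) splits_block[OF p a(1)]] collv_length[OF a3] a3 by simp
    have lt: "length (collv la sa (E (prod_list (sub la sa xs))) xs) < length xs"
      using collv_length[OF a3] a(2) a3 by simp
    show ?thesis using less.hyps[OF lt NCo a(4) b4] .
  qed
  have p': "partition_on {1..length xs} P" using p n_def by simp
  from nested_inv[OF less.prems(2) p'] nested_inv[OF less.prems(3) p']
  show ?case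
  proof (elim disjE exE conjE)
    assume "P = {{1..length xs}}" "v1 = E (prod_list xs)" "v2 = E (prod_list xs)"
    then show ?thesis by simp
  next
    fix l s assume "P = {{1..length xs}}" "{l+1..l+s} \<in> P" "1 \<le> s" "l + s < length xs"
    then show ?thesis using full_no_interval by blast
  next
    fix l s assume "P = {{1..length xs}}" "{l+1..l+s} \<in> P" "1 \<le> s" "l + s < length xs"
    then show ?thesis using full_no_interval by blast
  next
    fix la sa lb sb
    assume a: "{la+1..la+sa} \<in> P" "1 \<le> sa" "la + sa < length xs"
        "nested_rel E (outer la sa P) (collv la sa (E (prod_list (sub la sa xs))) xs) v1"
    and b: "{lb+1..lb+sb} \<in> P" "1 \<le> sb" "lb + sb < length xs"
        "nested_rel E (outer lb sb P) (collv lb sb (E (prod_list (sub lb sb xs))) xs) v2"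
    consider "la < lb" | "la = lb" | "lb < la" by linarith
    then show ?thesis
    proof cases
      case 1 then show ?thesis using key[OF a[folded n_def] b[folded n_def]] by blast
    next
      case 2 then show ?thesis using s[OF a[folded n_def]] b[folded n_def] by blast
    next
      case 3 then show ?thesis using key[OF b[folded n_def] a[folded n_def]] by simp
    qed
  qed
qed

lemma Phi_eq: "NCs (length xs) P \<Longrightarrow> nested_rel E P xs v \<Longrightarrow> Phi E P xs = v"
  unfolding Phi_def using nested_unique by blast

lemma Phi_full: "xs \<noteq> [] \<Longrightarrow> Phi E {{1..length xs}} xs = E (prod_list xs)"
proof -
  assume ne: "xs \<noteq> []"
  then have "length xs \<ge> 1" by (cases xs) auto
  then show ?thesis using Phi_eq[OF one_NCs nested_rel.full[OF ne]] by simp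
qed

lemma Phi_step:
  assumes P: "NCs (length xs) P" and W: "{l+1..l+s} \<in> P" and s: "1 \<le> s" and n: "l + s < length xs"
  shows "Phi E P xs = Phi E (outer l s P) (collv l s (E (prod_list (sub l s xs))) xs)"
proof -
  let ?ys = "collv l s (E (prod_list (sub l s xs))) xs"
  have p: "partition_on {1..length xs} P" using NCs_part[OF P] .
  have len: "length ?ys = length xs - s" using collv_length[OF n] .
  have nc: "NCs (length ?ys) (outer l s P)"
    using outer_NC[OF P splits_block[OF p W]] n len by simp
  have "?ys \<noteq> []" using len n by auto
  then obtain v where v: "nested_rel E (outer l s P) ?ys v" using nested_exists[OF nc] by blast
  then have "nested_rel E P xs v" using nested_step'[OF p W s n] by blast
  then show ?thesis using Phi_eq[OF P] Phi_eq[OF nc v] by simp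
qed

lemma Phi_in: "NCs (length xs) P \<Longrightarrow> xs \<noteq> [] \<Longrightarrow> Phi E P xs \<in> Bs"
  using nested_exists[of xs P E] Phi_eq nested_E E_in by metis

end

definition lin :: "('a::ring_1 \<Rightarrow> 'a) \<Rightarrow> bool" where
  "lin g \<longleftrightarrow> (\<forall>x y. g (x + y) = g x + g y) \<and> (\<forall>c x. g (of_int c * x) = of_int c * g x)"

lemma lin_comp: "lin g \<Longrightarrow> lin f \<Longrightarrow> lin (\<lambda>z. g (f z))"
  unfolding lin_def by simp

lemma lin_mul: "lin (\<lambda>z. A * z * C)"
  unfolding lin_def by (simp add: distrib_left distrib_right mult_of_int_commute mult.assoc)

lemma lin_rmul: "lin f \<Longrightarrow> lin (\<lambda>z. f z * D)"
  unfolding lin_def by (simp add: distrib_right mult.assoc)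

lemma lin_id: "lin (\<lambda>z. z)"
  unfolding lin_def by simp

lemma lin_zero: "lin g \<Longrightarrow> g 0 = 0"
  unfolding lin_def by (metis add_cancel_right_right add_0)

lemma lin_sum: assumes "lin g" "finite I" shows "g (\<Sum>i\<in>I. h i) = (\<Sum>i\<in>I. g (h i))"
  using assms(2)
proof (induction I rule: finite_induct)
  case empty then show ?case using lin_zero[OF assms(1)] by simp
next
  case (insert x F) then show ?case using assms(1) unfolding lin_def by simp
qed

lemma lin_int: "lin g \<Longrightarrow> g (of_int c * x) = of_int c * g x"
  unfolding lin_def by simp

lemma prod_list_update: "j < length ys \<Longrightarrow> prod_list (ys[j := z]) = prod_list (take j ys) * z * prod_list (drop (Suc j) ys)"
  by (simp add: upd_conv_take_nth_drop mult.assoc)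

context Ectx
begin

lemma lin_E: "lin f \<Longrightarrow> lin (\<lambda>z. E (f z))"
  unfolding lin_def by (simp add: E_add E_left[OF Bs_int])

lemma lin_Eprod: "j < length ys \<Longrightarrow> lin (\<lambda>z. E (prod_list (ys[j := z])))"
  unfolding prod_list_update by (rule lin_E[OF lin_mul])

lemma collv_upd:
  assumes n: "l + s < length ys" and j: "j < length ys"
  shows "collv l s (E (prod_list (sub l s (ys[j := z])))) (ys[j := z]) =
    (if j < l then (collv l s (E (prod_list (sub l s ys))) ys)[j := z]
     else if j < l + s then (collv l s (E (prod_list (sub l s ys))) ys)[l := E (prod_list (sub l s (ys[j := z]))) * ys ! (l + s)]
     else if j = l + s then (collv l s (E (prod_list (sub l s ys))) ys)[l := E (prod_list (sub l s ys)) * z]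
     else (collv l s (E (prod_list (sub l s ys))) ys)[j - s := z])"
proof -
  have n': "l + s < length (ys[j := z])" using n by simp
  have sub_eq: "sub l s (ys[j := z]) = sub l s ys" if "\<not> (l \<le> j \<and> j < l + s)"
    by (rule nth_equalityI) (use n that in \<open>auto simp: sub_length sub_nth nth_list_update\<close>)
  show ?thesis
  proof (rule nth_equalityI)
    show "length (collv l s (E (prod_list (sub l s (ys[j := z])))) (ys[j := z])) = length (if j < l then (collv l s (E (prod_list (sub l s ys))) ys)[j := z]
     else if j < l + s then (collv l s (E (prod_list (sub l s ys))) ys)[l := E (prod_list (sub l s (ys[j := z]))) * ys ! (l + s)]
     else if j = l + s then (collv l s (E (prod_list (sub l s ys))) ys)[l := E (prod_list (sub l s ys)) * z]
     else (collv l s (E (prod_list (sub l s ys))) ys)[j - s := z])"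
      using collv_length[OF n] collv_length[OF n'] by simp
    fix i assume i: "i < length (collv l s (E (prod_list (sub l s (ys[j := z])))) (ys[j := z]))"
    then have i': "i < length ys - s" using collv_length[OF n'] by simp
    note L = collv_nth[OF n' _, of i] and R = collv_nth[OF n _, of i]
    consider "j < l" | "l \<le> j" "j < l + s" | "j = l + s" | "j > l + s" by linarith
    then show "collv l s (E (prod_list (sub l s (ys[j := z])))) (ys[j := z]) ! i = (if j < l then (collv l s (E (prod_list (sub l s ys))) ys)[j := z]
     else if j < l + s then (collv l s (E (prod_list (sub l s ys))) ys)[l := E (prod_list (sub l s (ys[j := z]))) * ys ! (l + s)]
     else if j = l + s then (collv l s (E (prod_list (sub l s ys))) ys)[l := E (prod_list (sub l s ys)) * z]
     else (collv l s (E (prod_list (sub l s ys))) ys)[j - s := z]) ! i"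
    proof cases
      case 1
      then show ?thesis using L R i' sub_eq collv_length[OF n] n j by (auto simp: nth_list_update)
    next
      case 2
      then show ?thesis using L R i' collv_length[OF n] n j by (auto simp: nth_list_update)
    next
      case 3
      then show ?thesis using L R i' sub_eq collv_length[OF n] n j by (auto simp: nth_list_update)
    next
      case 4
      then show ?thesis using L R i' sub_eq collv_length[OF n] n j by (auto simp: nth_list_update)
    qed
  qed
qed

lemma Phi_lin:
  "NCs (length ys) P \<Longrightarrow> j < length ys \<Longrightarrow> lin (\<lambda>z. Phi E P (ys[j := z]))"
proof (induction "length ys" arbitrary: ys P j rule: less_induct)
  case less
  have ne: "ys \<noteq> []" using less.prems(2) by auto
  show ?case
  proof (cases "P = {{1..length ys}}")
    case True
    have "Phi E P (ys[j := z]) = E (prod_list (ys[j := z]))" for z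
      using Phi_full[of "ys[j := z]"] ne True by simp
    then show ?thesis using lin_Eprod[OF less.prems(2)] by simp
  next
    case False
    have n1: "length ys \<ge> 1" using ne by (cases ys) auto
    obtain l s where ls: "{l+1..l+s} \<in> P" "1 \<le> s" "l + s < length ys"
      using interval_block[OF less.prems(1) False n1] by blast
    let ?ys = "collv l s (E (prod_list (sub l s ys))) ys"
    have p: "partition_on {1..length ys} P" using NCs_part[OF less.prems(1)] .
    have len: "length ?ys = length ys - s" using collv_length[OF ls(3)] .
    have nc: "NCs (length ?ys) (outer l s P)"
      using outer_NC[OF less.prems(1) splits_block[OF p ls(1)]] ls len by simp
    have lt: "length ?ys < length ys" using len ls by simp
    have IH: "lin (\<lambda>z. Phi E (outer l s P) (?ys[j' := z]))" if "j' < length ?ys" for j'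
      using less.hyps[OF lt nc that] .
    have step: "Phi E P (ys[j := z]) = Phi E (outer l s P) (collv l s (E (prod_list (sub l s (ys[j := z])))) (ys[j := z]))" for z
      using Phi_step[of "ys[j := z]" P l s] less.prems(1) ls by simp
    note cu = collv_upd[OF ls(3) less.prems(2)]
    consider "j < l" | "l \<le> j" "j < l + s" | "j = l + s" | "j > l + s" by linarith
    then show ?thesis
    proof cases
      case 1
      then show ?thesis using IH[of j] step cu len ls by simp
    next
      case 2
      have sub_upd: "sub l s (ys[j := z]) = (sub l s ys)[j - l := z]" for z
        by (rule nth_equalityI) (use ls 2 in \<open>auto simp: sub_length sub_nth nth_list_update\<close>)
      have jl: "j - l < length (sub l s ys)" using 2 ls by (simp add: sub_length)
      have lf: "lin (\<lambda>z. E (prod_list (sub l s (ys[j := z]))) * ys ! (l + s))"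
        unfolding sub_upd by (rule lin_rmul[OF lin_Eprod[OF jl]])
      have "lin (\<lambda>z. Phi E (outer l s P) (?ys[l := E (prod_list (sub l s (ys[j := z]))) * ys ! (l + s)]))"
        using lin_comp[OF IH[of l] lf] len ls by simp
      then show ?thesis using step cu 2 by simp
    next
      case 3
      have "lin (\<lambda>z. Phi E (outer l s P) (?ys[l := E (prod_list (sub l s ys)) * z]))"
        using lin_comp[OF IH[of l] lin_mul[of "E (prod_list (sub l s ys))" 1]] len ls by simp
      then show ?thesis using step cu 3 by simp
    next
      case 4
      have "j - s < length ?ys" using 4 len less.prems(2) by simp
      then show ?thesis using IH[of "j - s"] step cu 4 by simp
    qed
  qed
qed

end

lemma inner_block:
  assumes P: "partition_on {1..n} P" and W: "{l+1..l+s} \<in> P" and n: "l + s \<le> n"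
  shows "inner l s P = {{1..s}}"
proof -
  have "{V\<in>P. V \<subseteq> {l+1..l+s}} = {{l+1..l+s}}"
  proof (intro equalityI subsetI)
    fix V assume V: "V \<in> {V\<in>P. V \<subseteq> {l+1..l+s}}"
    then obtain x where "x \<in> V" using part_ne[OF P] by blast
    then show "V \<in> {{l+1..l+s}}" using part_uniq[OF P _ W] V by blast
  qed (use W in auto)
  moreover have "(\<lambda>j. j - l) ` {l+1..l+s} = {1..s}"
  proof (intro equalityI subsetI)
    fix x assume "x \<in> (\<lambda>j. j - l) ` {l+1..l+s}" then show "x \<in> {1..s}" by auto
  next
    fix x assume "x \<in> {1..s}" then have "x + l \<in> {l+1..l+s}" "x = (x + l) - l" by auto
    then show "x \<in> (\<lambda>j. j - l) ` {l+1..l+s}" by blast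
  qed
  ultimately show ?thesis unfolding inner_def by simp
qed

lemma inner_mem:
  assumes V': "V' \<in> inner l s P"
  shows "(\<lambda>j. j + l) ` V' \<in> P"
proof -
  obtain V where V: "V \<in> P" "V \<subseteq> {l+1..l+s}" "V' = (\<lambda>j. j - l) ` V" using V' unfolding inner_def by blast
  have "(\<lambda>j. j + l) ` V' = (\<lambda>j. j - l + l) ` V" unfolding V(3) image_image ..
  also have "\<dots> = V"
  proof -
    have "(\<lambda>j. j - l + l) ` V = id ` V" using V(2) by (intro image_cong) auto
    then show ?thesis by simp
  qed
  finally show ?thesis using V(1) by simp
qed

lemma inner_one_imp:
  assumes P: "partition_on {1..n} P" and sp: "splits l s P" and n: "l + s \<le> n"
    and one: "inner l s P = {{1..s}}"
  shows "{l+1..l+s} \<in> P"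
  using inner_mem[of "{1..s}" l s P] one by (simp add: add.commute)

lemma sub_sub: "u + t \<le> s \<Longrightarrow> l + s \<le> length xs \<Longrightarrow> sub u t (sub l s xs) = sub (l + u) t xs"
  by (rule nth_equalityI) (auto simp: sub_length sub_nth add.assoc)

lemma splits_after:
  assumes P: "partition_on {1..n} P" and sp: "splits l s P" and U: "{l+u+1..l+u+t} \<in> P"
    and ut: "u + t < s"
  shows "splits l (s - t) (outer (l + u) t P)"
  unfolding splits_def outer_def
proof
  fix V' assume "V' \<in> (\<lambda>V. shift_down (l + u) t ` V) ` {V \<in> P. V \<inter> {l + u + 1..l + u + t} = {}}"
  then obtain V where V: "V \<in> P" "V \<inter> {l + u + 1..l + u + t} = {}" "V' = shift_down (l + u) t ` V" by blast
  have "V \<subseteq> {l+1..l+s} \<or> V \<inter> {l+1..l+s} = {}" using sp V(1) unfolding splits_def by blast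
  then show "V' \<subseteq> {l+1..l+(s-t)} \<or> V' \<inter> {l+1..l+(s-t)} = {}"
  proof
    assume "V \<subseteq> {l+1..l+s}"
    then have "V' \<subseteq> {l+1..l+(s-t)}" using V(2,3) ut unfolding shift_down_def by (auto simp: subset_iff) 
    then show ?thesis by blast
  next
    assume "V \<inter> {l+1..l+s} = {}"
    then have "V' \<inter> {l+1..l+(s-t)} = {}" using V(3) ut unfolding shift_down_def by (auto simp: disjoint_iff)
    then show ?thesis by blast
  qed
qed

context Ectx
begin

lemma Phi_decomp:
  "NCs (length xs) P \<Longrightarrow> splits l s P \<Longrightarrow> 1 \<le> s \<Longrightarrow> l + s < length xs \<Longrightarrow>
   Phi E P xs = Phi E (outer l s P) (collv l s (Phi E (inner l s P) (sub l s xs)) xs)"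
proof (induction s arbitrary: P xs l rule: less_induct)
  case (less s)
  define n where "n = length xs"
  have p: "partition_on {1..n} P" using NCs_part[OF less.prems(1)] unfolding n_def .
  have nle: "l + s \<le> n" using less.prems(4) n_def by simp
  have subne: "sub l s xs \<noteq> []" using sub_length[of l s xs] less.prems(3,4) by auto
  have sublen: "length (sub l s xs) = s" using sub_length[of l s xs] less.prems(4) by simp
  have INC: "NCs s (inner l s P)" using inner_NC[OF less.prems(1) less.prems(2)] less.prems(4) by simp
  show ?case
  proof (cases "{l+1..l+s} \<in> P")
    case True
    have "inner l s P = {{1..length (sub l s xs)}}" using inner_block[OF p True nle] sublen by simp
    then have "Phi E (inner l s P) (sub l s xs) = E (prod_list (sub l s xs))" using Phi_full[OF subne] by simp
    then show ?thesis using Phi_step[OF less.prems(1) True less.prems(3,4)] by simp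
  next
    case False
    have "inner l s P \<noteq> {{1..s}}" using inner_one_imp[OF p less.prems(2) nle] False by blast
    then obtain u t where ut: "{u+1..u+t} \<in> inner l s P" "1 \<le> t" "u + t < s"
      using interval_block[OF INC _ less.prems(3)] by blast
    have U: "{l+u+1..l+u+t} \<in> P"
      using inner_mem[OF ut(1)] by (simp add: add.commute add.left_commute)
    have c1: "l + u + t < length xs" using ut less.prems(4) by simp
    define xs1 where "xs1 = collv (l + u) t (E (prod_list (sub (l + u) t xs))) xs"
    define P1 where "P1 = outer (l + u) t P"
    have len1: "length xs1 = n - t" unfolding xs1_def using collv_length[OF c1] n_def by simp
    have NC1: "NCs (length xs1) P1"
      unfolding P1_def using outer_NC[OF less.prems(1) splits_block[OF p U]] c1 len1 n_def by simp
    have sp1: "splits l (s - t) P1" unfolding P1_def using splits_after[OF p less.prems(2) U ut(3)] .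
    have e0: "Phi E P xs = Phi E P1 xs1"
      unfolding P1_def xs1_def using Phi_step[OF less.prems(1) U ut(2) c1] by simp
    have st: "s - t < s" "1 \<le> s - t" "l + (s - t) < length xs1" using ut less.prems(4) len1 n_def by auto
    have e1: "Phi E P1 xs1 = Phi E (outer l (s - t) P1) (collv l (s - t) (Phi E (inner l (s - t) P1) (sub l (s - t) xs1)) xs1)"
      using less.IH[OF st(1) NC1 sp1 st(2,3)] .
    have p1: "partition_on {1..n-t} P1" using NCs_part[OF NC1] len1 by simp
    have nle1: "l + (s - t) \<le> n - t" using st(3) len1 by simp
    have spU: "splits (l + u) t P" using splits_block[OF p U] .
    have nleU: "l + u + t \<le> n" using c1 n_def by simp
    have o_eq: "outer l (s - t) P1 = outer l s P"
    proof -
      have e: "n - t - (s - t) = n - s" using ut by simp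
      have L: "partition_on {1..n-s} (outer l (s - t) P1)" using outer_part(1)[OF p1 sp1 nle1] e by simp
      have R: "partition_on {1..n-s} (outer l s P)" using outer_part(1)[OF p less.prems(2) nle] .
      show ?thesis
      proof (rule part_eq[OF L R])
        fix x y assume xy: "x \<in> {1..n-s}" "y \<in> {1..n-s}"
        have id: "unsh (l + u) t (unsh l (s - t) z) = unsh l s z" for z using ut unfolding unsh_def by auto
        have r: "unsh l (s - t) x \<in> {1..n-t}" "unsh l (s - t) y \<in> {1..n-t}"
          using unsh_range[OF _ nle1] xy e by auto
        have "same_block (outer l (s - t) P1) x y \<longleftrightarrow> same_block P (unsh l s x) (unsh l s y)"
          using outer_part(2)[OF p1 sp1 nle1, of x y] unfolding P1_def
          using outer_part(2)[OF p spU nleU] r xy e id unfolding P1_def by auto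
        also have "\<dots> \<longleftrightarrow> same_block (outer l s P) x y" using outer_part(2)[OF p less.prems(2) nle] xy by auto
        finally show "same_block (outer l (s - t) P1) x y \<longleftrightarrow> same_block (outer l s P) x y" .
      qed
    qed
    have i_eq: "inner l (s - t) P1 = outer u t (inner l s P)"
    proof -
      have pi: "partition_on {1..s} (inner l s P)" using inner_part(1)[OF p less.prems(2) nle] .
      have spi: "splits u t (inner l s P)" using splits_block[OF pi ut(1)] .
      have ut': "u + t \<le> s" using ut by simp
      have L: "partition_on {1..s-t} (inner l (s - t) P1)" using inner_part(1)[OF p1 sp1 nle1] .
      have R: "partition_on {1..s-t} (outer u t (inner l s P))" using outer_part(1)[OF pi spi ut'] .
      show ?thesis
      proof (rule part_eq[OF L R])
        fix x y assume xy: "x \<in> {1..s-t}" "y \<in> {1..s-t}"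
        have id: "unsh (l + u) t (z + l) = unsh u t z + l" for z unfolding unsh_def by auto
        have r: "x + l \<in> {1..n-t}" "y + l \<in> {1..n-t}" using xy nle1 by auto
        have r2: "unsh u t x \<in> {1..s}" "unsh u t y \<in> {1..s}" using unsh_range[OF _ ut'] xy by auto
        have "same_block (inner l (s - t) P1) x y \<longleftrightarrow> same_block P (unsh u t x + l) (unsh u t y + l)"
          using inner_part(2)[OF p1 sp1 nle1, of x y] unfolding P1_def
          using outer_part(2)[OF p spU nleU] r xy id unfolding P1_def by auto
        also have "\<dots> \<longleftrightarrow> same_block (outer u t (inner l s P)) x y"
          using outer_part(2)[OF pi spi ut'] inner_part(2)[OF p less.prems(2) nle] xy r2 by auto
        finally show "same_block (inner l (s - t) P1) x y \<longleftrightarrow> same_block (outer u t (inner l s P)) x y" .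
      qed
    qed
    have ut'': "u + t < length (sub l s xs)" using ut sublen by simp
    have s_eq: "sub l (s - t) xs1 = collv u t (E (prod_list (sub u t (sub l s xs)))) (sub l s xs)"
    proof (rule nth_equalityI)
      show "length (sub l (s - t) xs1) = length (collv u t (E (prod_list (sub u t (sub l s xs)))) (sub l s xs))"
        using sub_length[of l "s - t" xs1] st(3) collv_length[OF ut''] sublen by simp
      fix i assume "i < length (sub l (s - t) xs1)"
      then have i: "i < s - t" using sub_length[of l "s - t" xs1] st(3) by simp
      have a: "sub l (s - t) xs1 ! i = xs1 ! (l + i)" using sub_nth[of l "s - t" xs1 i] st(3) i by simp
      have b: "xs1 ! (l + i) = (if l + i < l + u then xs ! (l + i) else if l + i = l + u then E (prod_list (sub (l + u) t xs)) * xs ! (l + u + t) else xs ! (l + i + t))"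
        using collv_nth[OF c1, of "l + i"] i st len1 n_def unfolding xs1_def by auto
      have c: "collv u t (E (prod_list (sub u t (sub l s xs)))) (sub l s xs) ! i =
          (if i < u then sub l s xs ! i else if i = u then E (prod_list (sub u t (sub l s xs))) * sub l s xs ! (u + t) else sub l s xs ! (i + t))"
        using collv_nth[OF ut'', of i] i sublen by simp
      have d: "sub u t (sub l s xs) = sub (l + u) t xs" using sub_sub[of u t s l xs] ut less.prems(4) by simp
      show "sub l (s - t) xs1 ! i = collv u t (E (prod_list (sub u t (sub l s xs)))) (sub l s xs) ! i"
        using a b c d sub_nth[of l s xs] less.prems(4) i ut by (auto simp: add.assoc)
    qed
    have Phi_in_eq: "Phi E (inner l (s - t) P1) (sub l (s - t) xs1) = Phi E (inner l s P) (sub l s xs)"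
    proof -
      have "Phi E (inner l s P) (sub l s xs) = Phi E (outer u t (inner l s P)) (collv u t (E (prod_list (sub u t (sub l s xs)))) (sub l s xs))"
        using Phi_step[of "sub l s xs" "inner l s P" u t] INC sublen ut ut'' by simp
      then show ?thesis using i_eq s_eq by simp
    qed
    have l_eq: "collv l (s - t) b xs1 = collv l s b xs" for b
    proof (rule nth_equalityI)
      show "length (collv l (s - t) b xs1) = length (collv l s b xs)"
        using collv_length[OF st(3)] collv_length[OF less.prems(4)] len1 n_def ut by simp
      fix j assume "j < length (collv l (s - t) b xs1)"
      then have j: "j < n - s" using collv_length[OF st(3)] len1 ut by simp
      have L: "collv l (s - t) b xs1 ! j = (if j < l then xs1 ! j else if j = l then b * xs1 ! (l + (s - t)) else xs1 ! (j + (s - t)))"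
        using collv_nth[OF st(3), of j] j len1 ut by simp
      have R: "collv l s b xs ! j = (if j < l then xs ! j else if j = l then b * xs ! (l + s) else xs ! (j + s))"
        using collv_nth[OF less.prems(4), of j] j n_def by simp
      have X: "xs1 ! k = (if k < l + u then xs ! k else if k = l + u then E (prod_list (sub (l + u) t xs)) * xs ! (l + u + t) else xs ! (k + t))"
        if "k < n - t" for k using collv_nth[OF c1, of k] that n_def unfolding xs1_def by simp
      consider "j < l" | "j = l" | "j > l" by linarith
      then show "collv l (s - t) b xs1 ! j = collv l s b xs ! j"
      proof cases
        case 1 then show ?thesis using L R X[of j] j ut by simp
      next
        case 2
        have "l + (s - t) < n - t" "\<not> l + (s - t) < l + u" "l + (s - t) \<noteq> l + u" "l + (s - t) + t = l + s"
          using ut j 2 by auto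
        then show ?thesis using L R X[of "l + (s - t)"] 2 by simp
      next
        case 3
        have "j + (s - t) < n - t" "\<not> j + (s - t) < l + u" "j + (s - t) \<noteq> l + u" "j + (s - t) + t = j + s"
          using ut j 3 by auto
        then show ?thesis using L R X[of "j + (s - t)"] 3 by simp
      qed
    qed
    show ?thesis using e0 e1 o_eq Phi_in_eq l_eq by simp
  qed
qed

end

lemma collv_as_upd: "l < length xs \<Longrightarrow> collv l s b xs = (collv l s b' xs)[l := b * xs ! (l + s)]"
  unfolding collv_def by (simp add: list_update_append)

context Ectx
begin

lemma Phi_collv_lin:
  assumes R: "NCs (length (collv l s 0 xs)) R" and n: "l + s < length xs"
  shows "lin (\<lambda>b. Phi E R (collv l s b xs))"
proof -
  define c where "c = collv l s 0 xs"
  have len: "length c = length xs - s" unfolding c_def using collv_length[OF n] .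
  have ll: "l < length c" using len n by simp
  have R': "NCs (length c) R" using R unfolding c_def .
  have L: "lin (\<lambda>b. Phi E R (c[l := b * xs ! (l + s)]))"
    using lin_comp[OF Phi_lin[OF R' ll] lin_mul[of 1 "xs ! (l + s)"]] by simp
  have e: "collv l s b xs = c[l := b * xs ! (l + s)]" for b
    unfolding c_def using collv_as_upd[of l xs s b 0] n by linarith
  show ?thesis using L unfolding e .
qed

end

context blk
begin

lemma kappa_mult:
  assumes Ec: "Ectx E Bs" and len: "length xs = n"
  shows "kappa E \<chi> PP xs = kappa E \<chi>O (outer l s PP) (collv l s (kappa E \<chi>W (one_part s) (sub l s xs)) xs)"
proof -
  interpret Ectx E Bs by (rule Ec)
  define D where "D = {z\<in>INC n \<chi>. refines z PP}"
  define D1 where "D1 = {z\<in>INC s \<chi>W. refines z {{1..s}}}"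
  define D2 where "D2 = {z\<in>INC (n-s) \<chi>O. refines z (outer l s PP)}"
  define m1 where "m1 T = mu_INC s \<chi>W T (one_part s)" for T
  define m2 where "m2 R = mu_INC (n-s) \<chi>O R (outer l s PP)" for R
  define F where "F T R = of_int (m1 T * m2 R) * Phi E R (collv l s (Phi E T (sub l s xs)) xs)" for T R
  have sublen: "length (sub l s xs) = s" using sub_length[of l s xs] n len by simp
  have lenc: "length (collv l s b xs) = n - s" for b using collv_length[of l s xs b] n len by simp
  have finD1: "finite D1" unfolding D1_def using po_fin[OF refines_po] by simp
  have finD2: "finite D2" unfolding D2_def using po_fin[OF refines_po] by simp
  have "kappa E \<chi> PP xs = (\<Sum>z\<in>D. of_int (mu_INC n \<chi> z PP) * Phi E z xs)"
    unfolding kappa_def D_def len ..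
  also have "\<dots> = (\<Sum>z\<in>D. F (inner l s z) (outer l s z))"
  proof (rule sum.cong[OF refl])
    fix z assume z: "z \<in> D"
    then have z': "z \<in> INC n \<chi>" "refines z PP" unfolding D_def by auto
    note f = D_facts[OF z']
    have "Phi E z xs = Phi E (outer l s z) (collv l s (Phi E (inner l s z) (sub l s xs)) xs)"
      using Phi_decomp[of xs z l s] z'(1) INC_iff f(2) s1 n len by simp
    then show "of_int (mu_INC n \<chi> z PP) * Phi E z xs = F (inner l s z) (outer l s z)"
      unfolding F_def m1_def m2_def using mu_factor[OF z'] by simp
  qed
  also have "\<dots> = (\<Sum>w\<in>D1 \<times> D2. F (fst w) (snd w))"
    using sum.reindex_bij_betw[OF decomp_bij, of "\<lambda>w. F (fst w) (snd w)"] unfolding D_def D1_def D2_def by simp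
  also have "\<dots> = (\<Sum>T\<in>D1. \<Sum>R\<in>D2. F T R)"
    by (simp add: sum.cartesian_product')
  also have "\<dots> = (\<Sum>R\<in>D2. \<Sum>T\<in>D1. F T R)"
    by (rule sum.swap)
  also have "\<dots> = (\<Sum>R\<in>D2. of_int (m2 R) * Phi E R (collv l s (\<Sum>T\<in>D1. of_int (m1 T) * Phi E T (sub l s xs)) xs))"
  proof (rule sum.cong[OF refl])
    fix R assume R: "R \<in> D2"
    have NR: "NCs (length (collv l s 0 xs)) R" using R lenc INC_iff unfolding D2_def by auto
    have L: "lin (\<lambda>b. Phi E R (collv l s b xs))" using Phi_collv_lin[OF NR] n len by simp
    have "Phi E R (collv l s (\<Sum>T\<in>D1. of_int (m1 T) * Phi E T (sub l s xs)) xs) =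
          (\<Sum>T\<in>D1. of_int (m1 T) * Phi E R (collv l s (Phi E T (sub l s xs)) xs))"
      using lin_sum[OF L finD1] lin_int[OF L] by simp
    moreover have "F T R = of_int (m2 R) * (of_int (m1 T) * Phi E R (collv l s (Phi E T (sub l s xs)) xs))" for T
      unfolding F_def by (simp only: mult.commute[of "m1 T"] of_int_mult mult.assoc)
    ultimately show "(\<Sum>T\<in>D1. F T R) = of_int (m2 R) * Phi E R (collv l s (\<Sum>T\<in>D1. of_int (m1 T) * Phi E T (sub l s xs)) xs)"
      by (simp add: sum_distrib_left)
  qed
  also have "\<dots> = kappa E \<chi>O (outer l s PP) (collv l s (kappa E \<chi>W (one_part s) (sub l s xs)) xs)"
    unfolding kappa_def lenc sublen D1_def D2_def m1_def m2_def one_part_def ..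
  finally show ?thesis .
qed

end

context Ectx
begin

lemma Bs_zero: "0 \<in> Bs" using Bs_int[of 0] by simp

lemma Bs_sum: "(\<And>i. i \<in> I \<Longrightarrow> f i \<in> Bs) \<Longrightarrow> (\<Sum>i\<in>I. f i) \<in> Bs"
proof (induction I rule: infinite_finite_induct)
  case (infinite A) then show ?case using Bs_zero by simp
next
  case empty then show ?case using Bs_zero by simp
next
  case (insert x F) then show ?case using Bs_add by simp
qed

lemma kappa_in: "xs \<noteq> [] \<Longrightarrow> kappa E \<chi> P xs \<in> Bs"
  unfolding kappa_def
  by (rule Bs_sum) (use Bs_mult Bs_int Phi_in INC_iff in auto)

lemma main_ind:
  assumes faces: "\<And>i sd b x. b \<in> Bs \<Longrightarrow> x \<in> AA i sd \<Longrightarrow> b * x \<in> AA i sd"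
    and cf: "comb_free_boolean_indep E AA"
  shows "P \<in> INC (length xs) \<chi> \<Longrightarrow> (\<forall>k\<in>{1..length xs}. xs ! (k - 1) \<in> AA (\<omega> k) (\<chi> k)) \<Longrightarrow>
         (\<exists>V\<in>P. \<exists>j\<in>V. \<exists>k\<in>V. \<omega> j \<noteq> \<omega> k) \<Longrightarrow> kappa E \<chi> P xs = 0"
proof (induction "length xs" arbitrary: xs \<chi> \<omega> P rule: less_induct)
  case less
  define n where "n = length xs"
  have Pn: "P \<in> INC n \<chi>" using less.prems(1) n_def by simp
  have p: "partition_on {1..n} P" using INC_part[OF Pn] .
  obtain V j k where V: "V \<in> P" "j \<in> V" "k \<in> V" "\<omega> j \<noteq> \<omega> k" using less.prems(3) by blast
  have jk: "j \<in> {1..n}" "k \<in> {1..n}" using part_sub_A[OF p V(1)] V by auto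
  then have n1: "n \<ge> 1" by auto
  have cf': "\<And>ys ch om. (\<exists>j\<in>{1..length ys}. \<exists>k\<in>{1..length ys}. om j \<noteq> om k) \<Longrightarrow>
     (\<forall>k\<in>{1..length ys}. ys ! (k - 1) \<in> AA (om k) (ch k)) \<Longrightarrow> kappa E ch (one_part (length ys)) ys = 0"
    using cf unfolding comb_free_boolean_indep_def by blast
  show ?case
  proof (cases "P = {{1..n}}")
    case True
    have "kappa E \<chi> (one_part (length xs)) xs = 0"
      using cf less.prems(2) jk V(4) n_def unfolding comb_free_boolean_indep_def by blast
    then show ?thesis using True n_def unfolding one_part_def by simp
  next
    case False
    obtain l s where ls: "{l+1..l+s} \<in> P" "1 \<le> s" "l + s < n"
      using interval_block[OF _ False n1] Pn INC_iff by blast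
    interpret b: blk n l s \<chi> P using Pn ls by unfold_locales
    have Ec: "Ectx E Bs" by (rule Ectx_axioms)
    define K where "K = kappa E (\<lambda>j. \<chi> (j + l)) (one_part s) (sub l s xs)"
    have km: "kappa E \<chi> P xs = kappa E (\<lambda>j. \<chi> (unsh l s j)) (outer l s P) (collv l s K xs)"
      using b.kappa_mult[OF Ec n_def[symmetric]] unfolding K_def .
    have sublen: "length (sub l s xs) = s" using sub_length[of l s xs] ls n_def by simp
    have lenc: "length (collv l s K xs) = n - s" using collv_length[of l s xs K] ls n_def by simp
    have c3: "l + s < length xs" using ls n_def by simp
    show ?thesis
    proof (cases "V = {l+1..l+s}")
      case True
      have jl: "j - l \<in> {1..s}" "k - l \<in> {1..s}" "\<omega> (j - l + l) \<noteq> \<omega> (k - l + l)" using V True by auto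
      have pre1: "\<exists>ja\<in>{1..length (sub l s xs)}. \<exists>k\<in>{1..length (sub l s xs)}. \<omega> (ja + l) \<noteq> \<omega> (k + l)"
      proof (intro bexI)
        show "\<omega> (j - l + l) \<noteq> \<omega> (k - l + l)" by (rule jl(3))
        show "j - l \<in> {1..length (sub l s xs)}" using jl(1) sublen by simp
        show "k - l \<in> {1..length (sub l s xs)}" using jl(2) sublen by simp
      qed
      have pre2: "\<forall>k\<in>{1..length (sub l s xs)}. sub l s xs ! (k - 1) \<in> AA (\<omega> (k + l)) (\<chi> (k + l))"
      proof
        fix i assume i: "i \<in> {1..length (sub l s xs)}"
        then have "sub l s xs ! (i - 1) = xs ! (i + l - 1)" using sub_nth[of l s xs "i - 1"] sublen c3 by (auto simp: add.commute)
        moreover have "i + l \<in> {1..length xs}" using i sublen c3 by auto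
        ultimately show "sub l s xs ! (i - 1) \<in> AA (\<omega> (i + l)) (\<chi> (i + l))" using less.prems(2) by simp
      qed
      have "kappa E (\<lambda>j. \<chi> (j + l)) (one_part (length (sub l s xs))) (sub l s xs) = 0"
        by (rule cf'[OF pre1 pre2])
      then have "K = 0" unfolding K_def using sublen by simp
      have "Phi E R (collv l s 0 xs) = 0" if R: "R \<in> INC (n - s) (\<lambda>j. \<chi> (unsh l s j))" for R
      proof -
        have NR: "NCs (length (collv l s 0 xs)) R" using R INC_iff
          using collv_length[of l s xs 0] c3 n_def by auto
        show ?thesis using lin_zero[OF Phi_collv_lin[OF NR c3]] .
      qed
      then show ?thesis using km \<open>K = 0\<close> lenc unfolding kappa_def by simp
    next
      case False
      have VW: "V \<inter> {l+1..l+s} = {}" using part_uniq[OF p V(1) ls(1)] False by blast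
      let ?\<omega> = "\<lambda>j. \<omega> (unsh l s j)"
      let ?\<chi> = "\<lambda>j. \<chi> (unsh l s j)"
      have lt: "length (collv l s K xs) < length xs" using lenc ls n_def by simp
      have P': "outer l s P \<in> INC (length (collv l s K xs)) ?\<chi>" using b.outerPP lenc by simp
      have "sub l s xs \<noteq> []" using sublen ls(2) by auto
      then have Kin: "K \<in> Bs" unfolding K_def by (rule kappa_in)
      have mem: "\<forall>i\<in>{1..length (collv l s K xs)}. collv l s K xs ! (i - 1) \<in> AA (?\<omega> i) (?\<chi> i)"
      proof
        fix i assume i: "i \<in> {1..length (collv l s K xs)}"
        have cn: "collv l s K xs ! (i - 1) = (if i - 1 < l then xs ! (i - 1) else if i - 1 = l then K * xs ! (l + s) else xs ! (i - 1 + s))"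
          using collv_nth[OF c3, of "i - 1"] i lenc n_def by auto
        consider "i - 1 < l" | "i - 1 = l" | "i - 1 > l" by linarith
        then show "collv l s K xs ! (i - 1) \<in> AA (?\<omega> i) (?\<chi> i)"
        proof cases
          case 1
          then have "unsh l s i = i" "i \<in> {1..length xs}" using i lenc n_def unfolding unsh_def by auto
          then show ?thesis using cn 1 less.prems(2) by auto
        next
          case 2
          then have "unsh l s i = l + s + 1" "l + s + 1 \<in> {1..length xs}" using i c3 unfolding unsh_def by auto
          then have "xs ! (l + s) \<in> AA (?\<omega> i) (?\<chi> i)" using less.prems(2) by force
          then show ?thesis using cn 2 faces[OF Kin] by simp
        next
          case 3
          then have "unsh l s i = i + s" "i + s \<in> {1..length xs}" "i + s - 1 = i - 1 + s" using i lenc n_def unfolding unsh_def by auto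
          then show ?thesis using cn 3 less.prems(2) by (metis not_less_iff_gr_or_eq)
        qed
      qed
      have nc: "\<exists>V\<in>outer l s P. \<exists>j\<in>V. \<exists>k\<in>V. ?\<omega> j \<noteq> ?\<omega> k"
      proof -
        have "shift_down l s ` V \<in> outer l s P" unfolding outer_def using V(1) VW by blast
        moreover have "unsh l s (shift_down l s j) = j" "unsh l s (shift_down l s k) = k"
          using unsh_sh VW V(2,3) by blast+
        ultimately show ?thesis using V(2,3,4) by (metis image_eqI)
      qed
      have "kappa E ?\<chi> (outer l s P) (collv l s K xs) = 0"
        using less.hyps[OF lt P' mem nc] .
      then show ?thesis using km by simp
    qed
  qed
qed

end

lemma sc_facts:
  assumes "complex_structure sc"
  shows "sc 0 = 0" "sc (-1) = -1"
proof -
  have add: "\<And>c d. sc (c + d) = sc c + sc d" and one: "sc 1 = 1" using assms unfolding complex_structure_def by blast+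
  have "sc 0 = sc 0 + sc 0" using add[of 0 0] by simp
  then show z: "sc 0 = 0" by simp
  have "sc (-1) + sc 1 = sc 0" using add[of "-1" 1] by simp
  then show "sc (-1) = -1" using z one by (simp add: eq_neg_iff_add_eq_0)
qed

lemma Ectx_of:
  assumes "B_prob_space sc Bs E"
  shows "Ectx E Bs"
proof -
  have cs: "complex_structure sc" and us: "unital_subalgebra sc Bs"
    and Ein: "\<And>x. E x \<in> Bs" and Eadd: "\<And>x y. E (x + y) = E x + E y"
    and bim: "\<And>b1 b2 x. b1 \<in> Bs \<Longrightarrow> b2 \<in> Bs \<Longrightarrow> E (b1 * x * b2) = b1 * E x * b2"
    using assms unfolding B_prob_space_def by blast+
  have one: "1 \<in> Bs" and zero: "0 \<in> Bs" and badd: "\<And>x y. x \<in> Bs \<Longrightarrow> y \<in> Bs \<Longrightarrow> x + y \<in> Bs"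
    and bmul: "\<And>x y. x \<in> Bs \<Longrightarrow> y \<in> Bs \<Longrightarrow> x * y \<in> Bs"
    and bsc: "\<And>c x. x \<in> Bs \<Longrightarrow> sc c * x \<in> Bs"
    using us unfolding unital_subalgebra_def by blast+
  have nat: "of_nat m \<in> Bs" for m
    by (induction m) (use zero one badd in auto)
  have int: "of_int c \<in> Bs" for c
  proof (cases "c \<ge> 0")
    case True
    then have "of_int c = (of_nat (nat c) :: 'a)" by simp
    then show ?thesis using nat by simp
  next
    case False
    then have "of_int c = sc (-1) * (of_nat (nat (- c)) :: 'a)" using sc_facts[OF cs] by simp
    then show ?thesis using bsc nat by simp
  qed
  show ?thesis
  proof
    show "E (x + y) = E x + E y" for x y by (rule Eadd)
    show "E x \<in> Bs" for x by (rule Ein)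
    show "E (b * x) = b * E x" if "b \<in> Bs" for b x using bim[OF that one, of x] by simp
    show "of_int c \<in> Bs" for c by (rule int)
    show "x + y \<in> Bs" if "x \<in> Bs" "y \<in> Bs" for x y using badd that by blast
    show "x * y \<in> Bs" if "x \<in> Bs" "y \<in> Bs" for x y using bmul that by blast
  qed
qed

theorem proposition4p5:
  fixes sc :: "complex \<Rightarrow> 'a::ring_1"
    and Bs :: "'a set"
    and E :: "'a \<Rightarrow> 'a"
    and AA :: "'i \<Rightarrow> side \<Rightarrow> 'a set"
    and xs :: "'a list"
    and \<chi> :: "nat \<Rightarrow> side"
    and \<omega> :: "nat \<Rightarrow> 'i"
    and \<pi> :: "nat set set"
  assumes "B_prob_space sc Bs E"
    and "\<forall>i s. B_face sc Bs (AA i s)"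
    and "comb_free_boolean_indep E AA"
    and "\<pi> \<in> INC (length xs) \<chi>"
    and "\<forall>k\<in>{1..length xs}. xs ! (k - 1) \<in> AA (\<omega> k) (\<chi> k)"
    and "\<exists>V\<in>\<pi>. \<exists>j\<in>V. \<exists>k\<in>V. \<omega> j \<noteq> \<omega> k"
  shows "kappa E \<chi> \<pi> xs = 0"
proof -
  interpret Ectx E Bs using Ectx_of[OF assms(1)] .
  have faces: "\<And>i sd b x. b \<in> Bs \<Longrightarrow> x \<in> AA i sd \<Longrightarrow> b * x \<in> AA i sd"
    using assms(2) unfolding B_face_def by blast
  show ?thesis using main_ind[OF faces assms(3) assms(4) assms(5) assms(6)] .
qed

end
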